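(* Let $X$ be the unique strong solution of the CDGARCH variance equation with initial condition $\Phi$. Then $X$ satisfies the stochastic Volterra integral equation $$X_t=X_0+\int_0^t(\eta-c_\mu X_s)\,ds+c_\nu\int_{0+}^tX_{s-}\,dS_s+\Xi(X)_t,\quad t\ge0,$$ where $\Xi(X)_t=\int_{[-p,t]}F_\mu(t,s)X_s\,ds+\int_{(-q,t]}F_\nu(t,s)X_{s-}\,dS_s$, and equivalently the stochastic functional differential equation $$dX_t=\big(\eta-c_\mu X_t+\xi(X)_t\big)\,dt+c_\nu X_{t-}\,dS_t,\quad t\ge 0,$$ with $X_u=\Phi_u$ on $[-r,0]$, where $\xi(X)_t=\int_{-p}^0 f_\mu(u)X_{t+u}\,du+\int_{-q+}^0 f_\nu(u)X_{t+u-}\,dS_{t+u}$. In particular, $X$ is a semimartingale with paths of finite variation on compacts.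
   Context: Let $p,q\ge 0$, $r:=p\vee q>0$, and $(\Omega,\mathcal F,\mathbb F=(\mathcal F_t)_{t\ge -r},\mathbb P)$ a filtered probability space with the usual conditions, supporting a càdlàg adapted centered square-integrable Lévy process $(L_t)_{t\ge -r}$, $L_{-r}=0$, with increments $L_t-L_s$ independent of $\mathcal F_s$ and stationary; $S=[L,L]$, $S_t=\sigma_L^2(t+r)+\sum_{-r<s\le t}(\Delta L_s)^2$. Assume $\mathbb E[L_1^4]<\infty$. Parameters: $\eta>0$, $c_\mu,c_\nu>0$, $f_\mu,f_\nu$ nonnegative continuous, supported on $[-p,0]$, $[-q,0]$; $\mu(E)=\int_{E\cap[-p,0]}f_\mu-c_\mu\delta_0(E)$, $\nu(E)=\int_{E\cap[-q,0]}f_\nu+c_\nu\delta_0(E)$. Kernels: $F_\mu(t,s)=\int_{[-p\vee(s-t),s\wedge0]}f_\mu(u)du$, $F_\nu(t,s)=\int_{[-q\vee(s-t),s\wedge0]}f_\nu(u)du$ (zero if the interval is empty). The initial process $\Phi$ is càdlàg on $[-r,0]$, adapted to the natural filtration of $L$, with $\mathbb E[\sup_{[-r,0]}|\Phi|^2]<\infty$; extend $\Phi_t=\Phi_0$ for $t>0$, $\theta_t=\Phi_t+\eta t\mathbf 1_{[0,\infty)}(t)$. CDGARCH variance equation: $X_t=\theta_t+\int_{-p}^0\int_u^{t+u}X_s\,ds\,\mu(du)+\int_{-q}^0\int_{u+}^{t+u}X_{s-}\,dS_s\,\nu(du)$, $t\ge0$, $X=\Phi$ on $[-r,0]$. Strong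 solution: adapted càdlàg $X$ with $\mathbb E[\sup_{s\in[-r,t]}|X_s|^2]<\infty$ for all $t$, $X=\Phi$ on $[-r,0]$, satisfying the equation for $t>0$. *)

theory Defs
  imports "HOL-Probability.Probability"
begin

definition lim_left :: "(real \<Rightarrow> real) \<Rightarrow> real \<Rightarrow> real" where
  "lim_left f t = Lim (at_left t) f"

definition cadlag_from :: "real \<Rightarrow> (real \<Rightarrow> real) \<Rightarrow> bool" where
  "cadlag_from a f \<longleftrightarrow>
     (\<forall>t\<ge>a. continuous (at_right t) f) \<and> (\<forall>t>a. \<exists>l. (f \<longlongrightarrow> l) (at_left t))"

definition cadlag_on :: "real \<Rightarrow> real \<Rightarrow> (real \<Rightarrow> real) \<Rightarrow> bool" where
  "cadlag_on a b f \<longleftrightarrow>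
     (\<forall>t\<in>{a..<b}. continuous (at_right t) f) \<and>
     (\<forall>t\<in>{a<..b}. \<exists>l. (f \<longlongrightarrow> l) (at_left t))"

definition bounded_variation_on :: "(real \<Rightarrow> real) \<Rightarrow> real \<Rightarrow> real \<Rightarrow> bool" where
  "bounded_variation_on f a b \<longleftrightarrow>
     (\<exists>B. \<forall>ts. sorted ts \<and> set ts \<subseteq> {a..b} \<longrightarrow>
              (\<Sum>i<length ts - 1. \<bar>f (ts ! Suc i) - f (ts ! i)\<bar>) \<le> B)"

definition filtration_usual :: "'a measure \<Rightarrow> real \<Rightarrow> (real \<Rightarrow> 'a measure) \<Rightarrow> bool" where
  "filtration_usual M a F \<longleftrightarrow>
     (\<forall>t\<ge>a. subalgebra M (F t)) \<and>
     (\<forall>s t. a \<le> s \<longrightarrow> s \<le> t \<longrightarrow> sets (F s) \<subseteq> sets (F t)) \<and>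
     (\<forall>t\<ge>a. sets (F t) = (\<Inter>u\<in>{t<..}. sets (F u))) \<and>
     (\<forall>A\<in>null_sets M. \<forall>N. N \<subseteq> A \<longrightarrow> N \<in> sets (F a))"

definition adapted :: "(real \<Rightarrow> 'a measure) \<Rightarrow> real \<Rightarrow> (real \<Rightarrow> 'a \<Rightarrow> real) \<Rightarrow> bool" where
  "adapted F a X \<longleftrightarrow> (\<forall>t\<ge>a. X t \<in> borel_measurable (F t))"

definition natural_filtration :: "'a measure \<Rightarrow> real \<Rightarrow> (real \<Rightarrow> 'a \<Rightarrow> real) \<Rightarrow> real \<Rightarrow> 'a measure" where
  "natural_filtration M a L t = sigma (space M)
     ({{\<omega>\<in>space M. L s \<omega> \<in> B} | s B. s \<in> {a..t} \<and> B \<in> sets borel} \<union> null_sets M)"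

definition levy_process :: "'a measure \<Rightarrow> (real \<Rightarrow> 'a measure) \<Rightarrow> real \<Rightarrow> (real \<Rightarrow> 'a \<Rightarrow> real) \<Rightarrow> bool" where
  "levy_process M F a L \<longleftrightarrow>
     adapted F a L \<and>
     (\<forall>\<omega>\<in>space M. L a \<omega> = 0 \<and> cadlag_from a (\<lambda>t. L t \<omega>)) \<and>
     (\<forall>s t. a \<le> s \<longrightarrow> s \<le> t \<longrightarrow>
        (\<forall>A\<in>sets (F s). \<forall>B\<in>sets borel.
           measure M ({\<omega>\<in>space M. L t \<omega> - L s \<omega> \<in> B} \<inter> A)
             = measure M {\<omega>\<in>space M. L t \<omega> - L s \<omega> \<in> B} * measure M A)) \<and>
     (\<forall>s t. a \<le> s \<longrightarrow> s \<le> t \<longrightarrow>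
        distr M borel (\<lambda>\<omega>. L t \<omega> - L s \<omega>) = distr M borel (L (a + (t - s))))"

definition centered_square_integrable :: "'a measure \<Rightarrow> real \<Rightarrow> (real \<Rightarrow> 'a \<Rightarrow> real) \<Rightarrow> bool" where
  "centered_square_integrable M a L \<longleftrightarrow>
     (\<forall>t\<ge>a. integrable M (L t) \<and> integrable M (\<lambda>\<omega>. (L t \<omega>)\<^sup>2) \<and> integral\<^sup>L M (L t) = 0)"

text \<open>(sigma^2, nu) is the Gaussian variance / Levy measure of the (centered, square-integrable)
  Levy process L via the Levy--Khintchine formula for the unit increment L(a+1) - L(a) = L(a+1).\<close>
definition levy_khintchine :: "'a measure \<Rightarrow> real \<Rightarrow> (real \<Rightarrow> 'a \<Rightarrow> real) \<Rightarrow> real \<Rightarrow> real measure \<Rightarrow> bool" where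
  "levy_khintchine M a L \<sigma> \<nu> \<longleftrightarrow>
     \<sigma> \<ge> 0 \<and> sets \<nu> = sets borel \<and> emeasure \<nu> {0} = 0 \<and> integrable \<nu> (\<lambda>x. x\<^sup>2) \<and>
     (\<forall>u::real. (CLINT \<omega>|M. cis (u * L (a + 1) \<omega>))
        = exp (complex_of_real (- (\<sigma>\<^sup>2 * u\<^sup>2 / 2))
               + (CLINT x|\<nu>. cis (u * x) - 1 - \<i> * complex_of_real (u * x))))"

definition qv_path :: "real \<Rightarrow> real \<Rightarrow> (real \<Rightarrow> real) \<Rightarrow> real \<Rightarrow> real" where
  "qv_path \<sigma> a l t = \<sigma>\<^sup>2 * (t - a) + infsum (\<lambda>s. (l s - lim_left l s)\<^sup>2) {a<..t}"

definition dS :: "real \<Rightarrow> real \<Rightarrow> (real \<Rightarrow> real) \<Rightarrow> real measure" where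
  "dS \<sigma> a l = interval_measure (\<lambda>t. qv_path \<sigma> a l (max t a))"

definition Fker :: "(real \<Rightarrow> real) \<Rightarrow> real \<Rightarrow> real \<Rightarrow> real \<Rightarrow> real" where
  "Fker f p t s = (LBINT u:{max (-p) (s - t)..min s 0}. f u)"

definition theta :: "real \<Rightarrow> (real \<Rightarrow> real) \<Rightarrow> real \<Rightarrow> real" where
  "theta \<eta> \<phi> t = \<phi> (min t 0) + \<eta> * max t 0"

text \<open>Pathwise CDGARCH variance equation at time t, with the signed measures
  mu = f_mu du - c_mu delta_0 and nu = f_nu du + c_nu delta_0 written out.\<close>
definition cdgarch_eq ::
  "real \<Rightarrow> real \<Rightarrow> real \<Rightarrow> real \<Rightarrow> real \<Rightarrow> (real \<Rightarrow> real) \<Rightarrow> (real \<Rightarrow> real) \<Rightarrow>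
   real measure \<Rightarrow> (real \<Rightarrow> real) \<Rightarrow> (real \<Rightarrow> real) \<Rightarrow> real \<Rightarrow> bool" where
  "cdgarch_eq p q \<eta> c\<^sub>\<mu> c\<^sub>\<nu> f\<^sub>\<mu> f\<^sub>\<nu> SM \<phi> x t \<longleftrightarrow>
     x t = theta \<eta> \<phi> t
       + ((LBINT u:{-p..0}. f\<^sub>\<mu> u * (LBINT s:{u..t+u}. x s)) - c\<^sub>\<mu> * (LBINT s:{0..t}. x s))
       + ((LBINT u:{-q..0}. f\<^sub>\<nu> u * (LINT s:{u<..t+u}|SM. lim_left x s))
          + c\<^sub>\<nu> * (LINT s:{0<..t}|SM. lim_left x s))"

definition strong_solution ::
  "'a measure \<Rightarrow> (real \<Rightarrow> 'a measure) \<Rightarrow> real \<Rightarrow> real \<Rightarrow> real \<Rightarrow> real \<Rightarrow> real \<Rightarrow> real \<Rightarrow>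
   (real \<Rightarrow> real) \<Rightarrow> (real \<Rightarrow> real) \<Rightarrow> real \<Rightarrow> (real \<Rightarrow> 'a \<Rightarrow> real) \<Rightarrow>
   (real \<Rightarrow> 'a \<Rightarrow> real) \<Rightarrow> (real \<Rightarrow> 'a \<Rightarrow> real) \<Rightarrow> bool" where
  "strong_solution M F r p q \<eta> c\<^sub>\<mu> c\<^sub>\<nu> f\<^sub>\<mu> f\<^sub>\<nu> \<sigma> L \<Phi> X \<longleftrightarrow>
     adapted F (-r) X \<and>
     (\<forall>\<omega>\<in>space M. cadlag_from (-r) (\<lambda>t. X t \<omega>)) \<and>
     (\<forall>t. (\<integral>\<^sup>+\<omega>. (SUP s\<in>{-r..t}. ennreal ((X s \<omega>)\<^sup>2)) \<partial>M) < \<infinity>) \<and>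
     (\<forall>\<omega>\<in>space M. \<forall>t\<in>{-r..0}. X t \<omega> = \<Phi> t \<omega>) \<and>
     (AE \<omega> in M. \<forall>t>0. cdgarch_eq p q \<eta> c\<^sub>\<mu> c\<^sub>\<nu> f\<^sub>\<mu> f\<^sub>\<nu>
                         (dS \<sigma> (-r) (\<lambda>s. L s \<omega>)) (\<lambda>s. \<Phi> s \<omega>) (\<lambda>s. X s \<omega>) t)"

definition martingale_from :: "'a measure \<Rightarrow> (real \<Rightarrow> 'a measure) \<Rightarrow> real \<Rightarrow> (real \<Rightarrow> 'a \<Rightarrow> real) \<Rightarrow> bool" where
  "martingale_from M F a X \<longleftrightarrow>
     adapted F a X \<and> (\<forall>t\<ge>a. integrable M (X t)) \<and>
     (\<forall>s t. a \<le> s \<longrightarrow> s \<le> t \<longrightarrow>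
        (\<forall>A\<in>sets (F s). (LINT \<omega>:A|M. X t \<omega>) = (LINT \<omega>:A|M. X s \<omega>)))"

definition stopping_time_from :: "(real \<Rightarrow> 'a measure) \<Rightarrow> real \<Rightarrow> 'a set \<Rightarrow> ('a \<Rightarrow> ereal) \<Rightarrow> bool" where
  "stopping_time_from F a \<Omega> \<tau> \<longleftrightarrow>
     (\<forall>\<omega>\<in>\<Omega>. ereal a \<le> \<tau> \<omega>) \<and> (\<forall>t\<ge>a. {\<omega>\<in>\<Omega>. \<tau> \<omega> \<le> ereal t} \<in> sets (F t))"

definition local_martingale_from :: "'a measure \<Rightarrow> (real \<Rightarrow> 'a measure) \<Rightarrow> real \<Rightarrow> (real \<Rightarrow> 'a \<Rightarrow> real) \<Rightarrow> bool" where
  "local_martingale_from M F a X \<longleftrightarrow>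
     adapted F a X \<and> (\<forall>\<omega>\<in>space M. cadlag_from a (\<lambda>t. X t \<omega>)) \<and>
     (\<exists>\<tau>::nat \<Rightarrow> 'a \<Rightarrow> ereal.
        (\<forall>n. stopping_time_from F a (space M) (\<tau> n)) \<and>
        (\<forall>n. \<forall>\<omega>\<in>space M. \<tau> n \<omega> \<le> \<tau> (Suc n) \<omega>) \<and>
        (AE \<omega> in M. (\<lambda>n. \<tau> n \<omega>) \<longlonglongrightarrow> \<infinity>) \<and>
        (\<forall>n. martingale_from M F a (\<lambda>t \<omega>. X (real_of_ereal (min (ereal t) (\<tau> n \<omega>))) \<omega>)))"

definition fv_process :: "'a measure \<Rightarrow> (real \<Rightarrow> 'a measure) \<Rightarrow> real \<Rightarrow> (real \<Rightarrow> 'a \<Rightarrow> real) \<Rightarrow> bool" where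
  "fv_process M F a A \<longleftrightarrow>
     adapted F a A \<and> (\<forall>\<omega>\<in>space M. cadlag_from a (\<lambda>t. A t \<omega>)) \<and>
     (AE \<omega> in M. \<forall>T\<ge>a. bounded_variation_on (\<lambda>t. A t \<omega>) a T)"

definition semimartingale_from :: "'a measure \<Rightarrow> (real \<Rightarrow> 'a measure) \<Rightarrow> real \<Rightarrow> (real \<Rightarrow> 'a \<Rightarrow> real) \<Rightarrow> bool" where
  "semimartingale_from M F a X \<longleftrightarrow>
     adapted F a X \<and> (\<forall>\<omega>\<in>space M. cadlag_from a (\<lambda>t. X t \<omega>)) \<and>
     (\<exists>Mt A. local_martingale_from M F a Mt \<and> (\<forall>\<omega>\<in>space M. Mt a \<omega> = 0) \<and>
            fv_process M F a A \<and> (\<forall>\<omega>\<in>space M. A a \<omega> = 0) \<and>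
            (AE \<omega> in M. \<forall>t\<ge>a. X t \<omega> = X a \<omega> + Mt t \<omega> + A t \<omega>))"

end

theory Submission
  imports Defs
begin

lemma right_cont_seq:
  fixes x :: "real \<Rightarrow> real"
  assumes rc: "continuous (at_right s) x" and ge: "\<And>n. c n \<ge> s" and lim: "c \<longlonglongrightarrow> s"
  shows "(\<lambda>n. x (c n)) \<longlonglongrightarrow> x s"
proof (rule LIMSEQ_I)
  fix e :: real assume e: "0 < e"
  have "(x \<longlongrightarrow> x s) (at_right s)" using rc by (simp add: continuous_within)
  then have "eventually (\<lambda>y. dist (x y) (x s) < e) (at_right s)"
    using e by (simp add: tendsto_iff)
  then obtain b where b: "b > s" "\<And>y. y > s \<Longrightarrow> y < b \<Longrightarrow> dist (x y) (x s) < e"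
    unfolding eventually_at_right_field by blast
  obtain no where no: "\<And>n. n \<ge> no \<Longrightarrow> norm (c n - s) < b - s"
    using LIMSEQ_D[OF lim, of "b - s"] b(1) by auto
  show "\<exists>no. \<forall>n\<ge>no. norm (x (c n) - x s) < e"
  proof (intro exI allI impI)
    fix n assume "n \<ge> no"
    then have "c n < b" using no[of n] by auto
    show "norm (x (c n) - x s) < e"
    proof (cases "c n = s")
      case True then show ?thesis using e by simp
    next
      case False then have "c n > s" using ge[of n] by auto
      then show ?thesis using b(2)[of "c n"] \<open>c n < b\<close> by (simp add: dist_norm)
    qed
  qed
qed

lemma left_lim_seq:
  fixes x :: "real \<Rightarrow> real"
  assumes ll: "(x \<longlongrightarrow> l) (at_left s)" and lt: "\<And>n. c n < s" and lim: "c \<longlonglongrightarrow> s"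
  shows "(\<lambda>n. x (c n)) \<longlonglongrightarrow> l"
proof (rule LIMSEQ_I)
  fix e :: real assume e: "0 < e"
  have "eventually (\<lambda>y. dist (x y) l < e) (at_left s)"
    using e ll by (simp add: tendsto_iff)
  then obtain b where b: "b < s" "\<And>y. y > b \<Longrightarrow> y < s \<Longrightarrow> dist (x y) l < e"
    unfolding eventually_at_left_field by blast
  obtain no where no: "\<And>n. n \<ge> no \<Longrightarrow> norm (c n - s) < s - b"
    using LIMSEQ_D[OF lim, of "s - b"] b(1) by auto
  show "\<exists>no. \<forall>n\<ge>no. norm (x (c n) - l) < e"
  proof (intro exI allI impI)
    fix n assume "n \<ge> no"
    then have "c n > b" using no[of n] by auto
    then show "norm (x (c n) - l) < e" using b(2)[of "c n"] lt[of n] by (simp add: dist_norm)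
  qed
qed

lemma lim_left_eq:
  assumes "(x \<longlongrightarrow> l) (at_left (s::real))"
  shows "lim_left x s = l"
  unfolding lim_left_def using assms by (intro tendsto_Lim) (simp_all add: trivial_limit_at_left_real)

lemma cadlag_lim_left:
  assumes "cadlag_from a x" "s > a"
  shows "(x \<longlongrightarrow> lim_left x s) (at_left s)"
proof -
  obtain l where "(x \<longlongrightarrow> l) (at_left s)" using assms unfolding cadlag_from_def by blast
  then show ?thesis using lim_left_eq by metis
qed

lemma cadlag_meas:
  fixes x :: "real \<Rightarrow> real"
  assumes cad: "cadlag_from a x"
  shows "(\<lambda>s. indicator {a..} s * x s) \<in> borel_measurable borel"
proof (rule borel_measurable_LIMSEQ_real)
  let ?c = "\<lambda>n s. a + real_of_int \<lceil>(s - a) * real (Suc n)\<rceil> / real (Suc n)"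
  show "(\<lambda>s. indicator {a..} s * x (?c n s)) \<in> borel_measurable borel" for n
  proof -
    have "(\<lambda>s. (\<lambda>k s. indicator {a..} s * x (a + real_of_int k / real (Suc n))) \<lceil>(s - a) * real (Suc n)\<rceil> s) \<in> borel_measurable borel"
      by (rule measurable_compose_countable) measurable
    then show ?thesis by simp
  qed
  fix s :: real
  show "(\<lambda>n. indicator {a..} s * x (?c n s)) \<longlonglongrightarrow> indicator {a..} s * x s"
  proof (cases "s \<ge> a")
    case False then show ?thesis by simp
  next
    case True
    have ge: "?c n s \<ge> s" for n
    proof -
      have "(s - a) * real (Suc n) \<le> real_of_int \<lceil>(s - a) * real (Suc n)\<rceil>" by (rule le_of_int_ceiling)
      have m: "real (Suc n) > 0" by simp
      have "s - a \<le> real_of_int \<lceil>(s - a) * real (Suc n)\<rceil> / real (Suc n)"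
        unfolding pos_le_divide_eq[OF m] by fact
      then show ?thesis by simp
    qed
    have le: "?c n s \<le> s + inverse (real (Suc n))" for n
    proof -
      have "real_of_int \<lceil>(s - a) * real (Suc n)\<rceil> \<le> (s - a) * real (Suc n) + 1"
        by linarith
      then have "real_of_int \<lceil>(s - a) * real (Suc n)\<rceil> / real (Suc n) \<le> ((s - a) * real (Suc n) + 1) / real (Suc n)"
        by (intro divide_right_mono) auto
      also have "\<dots> = s - a + inverse (real (Suc n))"
        by (simp add: field_simps)
      finally have "real_of_int \<lceil>(s - a) * real (Suc n)\<rceil> / real (Suc n) \<le> s - a + inverse (real (Suc n))" .
      then show ?thesis by linarith
    qed
    have hl: "(\<lambda>n. s + inverse (real (Suc n))) \<longlonglongrightarrow> s + 0"
      by (intro tendsto_add tendsto_const LIMSEQ_inverse_real_of_nat)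
    have cl: "(\<lambda>n. ?c n s) \<longlonglongrightarrow> s"
    proof (rule real_tendsto_sandwich[where f="\<lambda>_. s" and h="\<lambda>n. s + inverse (real (Suc n))"])
      show "\<forall>\<^sub>F n in sequentially. s \<le> ?c n s" using ge by (intro always_eventually) blast
      show "\<forall>\<^sub>F n in sequentially. ?c n s \<le> s + inverse (real (Suc n))" using le by (intro always_eventually) blast
      show "(\<lambda>n. s) \<longlonglongrightarrow> s" by (rule tendsto_const)
      show "(\<lambda>n. s + inverse (real (Suc n))) \<longlonglongrightarrow> s" using hl by simp
    qed
    have rc: "continuous (at_right s) x" using cad True unfolding cadlag_from_def by blast
    have "(\<lambda>n. x (?c n s)) \<longlonglongrightarrow> x s"
      by (rule right_cont_seq[OF rc ge cl])
    then show ?thesis using True by simp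
  qed
qed

lemma cadlag_meas_lim_left:
  fixes x :: "real \<Rightarrow> real"
  assumes cad: "cadlag_from a x"
  shows "(\<lambda>s. indicator {a<..} s * lim_left x s) \<in> borel_measurable borel"
proof (rule borel_measurable_LIMSEQ_real)
  have m: "(\<lambda>s. indicator {a..} s * x s) \<in> borel_measurable borel" by (rule cadlag_meas[OF cad])
  show "(\<lambda>s. indicator {a<..} s * (indicator {a..} (s - inverse (real (Suc n))) * x (s - inverse (real (Suc n))))) \<in> borel_measurable borel" for n
    using measurable_compose[OF _ m, of "\<lambda>s. s - inverse (real (Suc n))" borel] by measurable
  fix s :: real
  show "(\<lambda>n. indicator {a<..} s * (indicator {a..} (s - inverse (real (Suc n))) * x (s - inverse (real (Suc n))))) \<longlonglongrightarrow> indicator {a<..} s * lim_left x s"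
  proof (cases "s > a")
    case False then show ?thesis by simp
  next
    case True
    have c: "(\<lambda>n. s - inverse (real (Suc n))) \<longlonglongrightarrow> s - 0"
      by (intro tendsto_diff tendsto_const LIMSEQ_inverse_real_of_nat)
    have l: "(\<lambda>n. x (s - inverse (real (Suc n)))) \<longlonglongrightarrow> lim_left x s"
      using c by (intro left_lim_seq[OF cadlag_lim_left[OF cad True]]) auto
    have ev: "eventually (\<lambda>n. inverse (real (Suc n)) < s - a) sequentially"
      using True by (intro order_tendstoD(2)[OF LIMSEQ_inverse_real_of_nat]) auto
    have "eventually (\<lambda>n. x (s - inverse (real (Suc n))) = indicator {a<..} s * (indicator {a..} (s - inverse (real (Suc n))) * x (s - inverse (real (Suc n))))) sequentially"
      using ev by eventually_elim (use True in auto)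
    from tendsto_cong[OF this] l True show ?thesis by simp
  qed
qed

lemma cadlag_local_bound:
  fixes x :: "real \<Rightarrow> real"
  assumes cad: "cadlag_from a x" and t: "t \<ge> a"
  shows "\<exists>d>0. \<exists>K. \<forall>s. a \<le> s \<and> dist s t < d \<longrightarrow> \<bar>x s\<bar> \<le> K"
proof -
  have "(x \<longlongrightarrow> x t) (at_right t)" using cad t by (simp add: cadlag_from_def continuous_within)
  then have "eventually (\<lambda>y. dist (x y) (x t) < 1) (at_right t)" by (simp add: tendsto_iff)
  then obtain b where b: "b > t" "\<And>y. y > t \<Longrightarrow> y < b \<Longrightarrow> dist (x y) (x t) < 1"
    unfolding eventually_at_right_field by blast
  show ?thesis
  proof (cases "t = a")
    case True
    show ?thesis
    proof (intro exI conjI allI impI)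
      show "b - t > 0" using b by simp
      fix s assume s: "a \<le> s \<and> dist s t < b - t"
      show "\<bar>x s\<bar> \<le> \<bar>x t\<bar> + 1"
      proof (cases "s = t")
        case False
        then have "s > t" "s < b" using s True by (auto simp: dist_real_def)
        then show ?thesis using b(2)[of s] by (auto simp: dist_real_def)
      qed simp
    qed
  next
    case False
    then have "t > a" using t by simp
    have "(x \<longlongrightarrow> lim_left x t) (at_left t)" by (rule cadlag_lim_left[OF cad \<open>t > a\<close>])
    then have "eventually (\<lambda>y. dist (x y) (lim_left x t) < 1) (at_left t)" by (simp add: tendsto_iff)
    then obtain b0 where b0: "b0 < t" "\<And>y. y > b0 \<Longrightarrow> y < t \<Longrightarrow> dist (x y) (lim_left x t) < 1"
      unfolding eventually_at_left_field by blast
    show ?thesis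
    proof (intro exI conjI allI impI)
      show "min (b - t) (t - b0) > 0" using b b0 by simp
      fix s assume s: "a \<le> s \<and> dist s t < min (b - t) (t - b0)"
      show "\<bar>x s\<bar> \<le> \<bar>x t\<bar> + \<bar>lim_left x t\<bar> + 1"
      proof (cases "s = t")
        case True then show ?thesis by simp
      next
        case False
        show ?thesis
        proof (cases "s > t")
          case True
          then have "s < b" using s by (auto simp: dist_real_def)
          then show ?thesis using b(2)[of s] True by (auto simp: dist_real_def)
        next
          case False
          then have "s < t" "s > b0" using s \<open>s \<noteq> t\<close> by (auto simp: dist_real_def)
          then show ?thesis using b0(2)[of s] by (auto simp: dist_real_def)
        qed
      qed
    qed
  qed
qed

lemma cadlag_bounded:
  fixes x :: "real \<Rightarrow> real"
  assumes cad: "cadlag_from a x"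
  shows "\<exists>K. \<forall>s\<in>{a..b}. \<bar>x s\<bar> \<le> K"
proof -
  have "\<forall>t\<in>{a..b}. \<exists>d. d > 0 \<and> (\<exists>K. \<forall>s. a \<le> s \<and> dist s t < d \<longrightarrow> \<bar>x s\<bar> \<le> K)"
    using cadlag_local_bound[OF cad] by auto
  then obtain d where d: "\<And>t. t \<in> {a..b} \<Longrightarrow> d t > 0 \<and> (\<exists>K. \<forall>s. a \<le> s \<and> dist s t < d t \<longrightarrow> \<bar>x s\<bar> \<le> K)"
    by metis
  then obtain K where K: "\<And>t. t \<in> {a..b} \<Longrightarrow> \<forall>s. a \<le> s \<and> dist s t < d t \<longrightarrow> \<bar>x s\<bar> \<le> K t"
    by metis
  obtain C where C: "C \<subseteq> {a..b}" "finite C" "{a..b} \<subseteq> (\<Union>c\<in>C. ball c (d c))"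
    by (rule compactE_image[of "{a..b}" "{a..b}" "\<lambda>c. ball c (d c)"])
       (use d in \<open>auto simp: dist_commute\<close>)
  show ?thesis
  proof (intro exI ballI)
    fix s assume s: "s \<in> {a..b}"
    then obtain c where c: "c \<in> C" "s \<in> ball c (d c)" using C by auto
    then have "\<bar>x s\<bar> \<le> K c" using K[of c] C s by (auto simp: dist_commute)
    also have "\<dots> \<le> \<bar>K c\<bar>" by simp
    also have "\<dots> \<le> (\<Sum>c\<in>C. \<bar>K c\<bar>)" using C c by (intro member_le_sum) auto
    finally show "\<bar>x s\<bar> \<le> (\<Sum>c\<in>C. \<bar>K c\<bar>)" .
  qed
qed

lemma cadlag_lim_left_bounded:
  fixes x :: "real \<Rightarrow> real"
  assumes cad: "cadlag_from a x" and K: "\<forall>s\<in>{a..b}. \<bar>x s\<bar> \<le> K" and s: "s \<in> {a<..b}"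
  shows "\<bar>lim_left x s\<bar> \<le> K"
proof -
  have "((\<lambda>y. \<bar>x y\<bar>) \<longlongrightarrow> \<bar>lim_left x s\<bar>) (at_left s)"
    using cadlag_lim_left[OF cad] s by (intro tendsto_rabs) auto
  moreover have "eventually (\<lambda>y. \<bar>x y\<bar> \<le> K) (at_left s)"
    using s K by (intro eventually_mono[OF eventually_at_left_real[of a s]]) auto
  ultimately show ?thesis
    by (rule tendsto_upperbound) (simp add: trivial_limit_at_left_real)
qed

lemma sigma_finite_Ioc:
  fixes N :: "real measure"
  assumes sets: "sets N = sets borel" and fin: "\<And>a b. emeasure N {a<..b} < \<infinity>"
  shows "sigma_finite_measure N"
proof
  have sp: "space N = UNIV" using sets_eq_imp_space_eq[OF sets] by simp
  show "\<exists>A. countable A \<and> A \<subseteq> sets N \<and> \<Union> A = space N \<and> (\<forall>a\<in>A. emeasure N a \<noteq> \<infinity>)"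
  proof (intro exI conjI)
    show "countable (range (\<lambda>n::nat. {-real n<..real n}))" by simp
    show "range (\<lambda>n::nat. {-real n<..real n}) \<subseteq> sets N" unfolding sets by (intro image_subsetI) simp
    show "\<Union> (range (\<lambda>n::nat. {-real n<..real n})) = space N"
    proof -
      have "\<exists>n::nat. z \<in> {-real n<..real n}" for z :: real
      proof -
        obtain n :: nat where "\<bar>z\<bar> < real n" using reals_Archimedean2 by blast
        then show ?thesis by (intro exI[of _ n]) auto
      qed
      then show ?thesis unfolding sp by auto
    qed
    show "\<forall>a\<in>range (\<lambda>n::nat. {-real n<..real n}). emeasure N a \<noteq> \<infinity>"
      using fin by (simp add: less_top)
  qed
qed


lemma bv_dom:
  fixes f H :: "real \<Rightarrow> real"
  assumes ab: "a \<le> b" and dom: "\<And>s t. a \<le> s \<Longrightarrow> s \<le> t \<Longrightarrow> t \<le> b \<Longrightarrow> \<bar>f t - f s\<bar> \<le> H t - H s"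
  shows "bounded_variation_on f a b"
  unfolding bounded_variation_on_def
proof (intro exI allI impI)
  fix ts :: "real list" assume ts: "sorted ts \<and> set ts \<subseteq> {a..b}"
  let ?n = "length ts"
  have B0: "0 \<le> H b - H a" using dom[of a b] ab by force
  show "(\<Sum>i<?n - 1. \<bar>f (ts ! Suc i) - f (ts ! i)\<bar>) \<le> H b - H a"
  proof (cases "?n = 0")
    case True then show ?thesis using B0 by simp
  next
    case False
    have mem: "i < ?n \<Longrightarrow> ts ! i \<in> {a..b}" for i using ts nth_mem by blast
    have mono: "i < ?n - 1 \<Longrightarrow> ts ! i \<le> ts ! Suc i" for i
      using ts by (auto intro: sorted_nth_mono)
    have "(\<Sum>i<?n - 1. \<bar>f (ts ! Suc i) - f (ts ! i)\<bar>) \<le> (\<Sum>i<?n - 1. H (ts ! Suc i) - H (ts ! i))"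
    proof (rule sum_mono)
      fix i assume "i \<in> {..<?n - 1}"
      then have "i < ?n - 1" by simp
      then show "\<bar>f (ts ! Suc i) - f (ts ! i)\<bar> \<le> H (ts ! Suc i) - H (ts ! i)"
        using dom[of "ts ! i" "ts ! Suc i"] mem[of i] mem[of "Suc i"] mono[of i] by auto
    qed
    also have "\<dots> = H (ts ! (?n - 1)) - H (ts ! 0)"
      using sum_lessThan_telescope[of "\<lambda>i. H (ts ! i)" "?n - 1"] by simp
    also have "\<dots> \<le> H b - H a"
    proof -
      have "ts ! (?n - 1) \<in> {a..b}" "ts ! 0 \<in> {a..b}" using mem False by auto
      moreover have "ts ! 0 \<le> ts ! (?n - 1)" using ts False by (auto intro: sorted_nth_mono)
      ultimately show ?thesis
        using dom[of "ts ! (?n - 1)" b] dom[of a "ts ! 0"] by force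
    qed
    finally show ?thesis .
  qed
qed


lemma kernel_dom:
  fixes N :: "real measure" and k :: "real \<Rightarrow> real \<Rightarrow> real" and y :: "real \<Rightarrow> real"
  assumes i1: "integrable N (\<lambda>s. k t s * y s)" "integrable N (\<lambda>s. k t' s * y s)"
    and i2: "integrable N (k t)" "integrable N (k t')"
    and pos: "\<And>s. 0 \<le> k t s" and mono: "\<And>s. k t s \<le> k t' s"
    and bnd: "\<And>s. k t' s \<noteq> 0 \<Longrightarrow> \<bar>y s\<bar> \<le> K"
  shows "\<bar>(\<integral>s. k t' s * y s \<partial>N) - (\<integral>s. k t s * y s \<partial>N)\<bar>
          \<le> K * (\<integral>s. k t' s \<partial>N) - K * (\<integral>s. k t s \<partial>N)"
proof -
  have "(\<integral>s. k t' s * y s \<partial>N) - (\<integral>s. k t s * y s \<partial>N) = (\<integral>s. k t' s * y s - k t s * y s \<partial>N)"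
    using i1 by simp
  also have "\<bar>\<dots>\<bar> \<le> (\<integral>s. \<bar>k t' s * y s - k t s * y s\<bar> \<partial>N)"
    by (rule integral_abs_bound)
  also have "\<dots> \<le> (\<integral>s. K * k t' s - K * k t s \<partial>N)"
  proof (rule integral_mono)
    show "integrable N (\<lambda>s. \<bar>k t' s * y s - k t s * y s\<bar>)" using i1 by auto
    show "integrable N (\<lambda>s. K * k t' s - K * k t s)" using i2 by auto
    fix s
    show "\<bar>k t' s * y s - k t s * y s\<bar> \<le> K * k t' s - K * k t s"
    proof (cases "k t' s = 0")
      case True
      then have "k t s = 0" using pos[of s] mono[of s] by simp
      then show ?thesis using True by simp
    next
      case False
      have "\<bar>k t' s * y s - k t s * y s\<bar> = (k t' s - k t s) * \<bar>y s\<bar>"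
        using pos[of s] mono[of s] by (simp add: abs_mult left_diff_distrib[symmetric])
      also have "\<dots> \<le> (k t' s - k t s) * K"
        using bnd[OF False] pos[of s] mono[of s] by (intro mult_left_mono) auto
      finally show ?thesis by (simp add: algebra_simps)
    qed
  qed
  also have "\<dots> = K * (\<integral>s. k t' s \<partial>N) - K * (\<integral>s. k t s \<partial>N)"
    using i2 by simp
  finally show ?thesis .
qed


lemma fubini_rect:
  fixes h :: "real \<Rightarrow> real \<Rightarrow> real" and M1 M2 :: "real measure"
  assumes sf1: "sigma_finite_measure M1" and sf2: "sigma_finite_measure M2"
    and s1: "sets M1 = sets borel" and s2: "sets M2 = sets borel"
    and meas: "(\<lambda>(u, s). h u s) \<in> borel_measurable (borel \<Otimes>\<^sub>M borel)"
    and A: "A \<in> sets borel" "emeasure M1 A < \<infinity>"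
    and B: "B \<in> sets borel" "emeasure M2 B < \<infinity>"
    and bnd: "\<And>u s. \<bar>h u s\<bar> \<le> C * indicator (A \<times> B) (u, s)"
  shows "(\<integral>u. (\<integral>s. h u s \<partial>M2) \<partial>M1) = (\<integral>s. (\<integral>u. h u s \<partial>M1) \<partial>M2)"
    and "integrable M1 (\<lambda>u. \<integral>s. h u s \<partial>M2)"
    and "integrable M2 (\<lambda>s. \<integral>u. h u s \<partial>M1)"
proof -
  interpret P: pair_sigma_finite M1 M2 using sf1 sf2 by (simp add: pair_sigma_finite_def)
  have sP: "sets (M1 \<Otimes>\<^sub>M M2) = sets (borel \<Otimes>\<^sub>M borel)"
    by (intro sets_pair_measure_cong s1 s2)
  have sP': "sets (M1 \<Otimes>\<^sub>M M2) = sets (borel :: (real \<times> real) measure)"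
    unfolding sP borel_prod ..
  have m: "(\<lambda>(u, s). h u s) \<in> borel_measurable (M1 \<Otimes>\<^sub>M M2)"
    using meas measurable_cong_sets[OF sP refl] by blast
  have AB: "A \<times> B \<in> sets (M1 \<Otimes>\<^sub>M M2)" using A B s1 s2 by auto
  have "emeasure (M1 \<Otimes>\<^sub>M M2) (A \<times> B) = emeasure M1 A * emeasure M2 B"
    using A B s1 s2 by (intro P.M2.emeasure_pair_measure_Times) auto
  also have "\<dots> < \<infinity>" using A B by (simp add: ennreal_mult_less_top)
  finally have fin: "emeasure (M1 \<Otimes>\<^sub>M M2) (A \<times> B) < \<infinity>" .
  have ib: "integrable (M1 \<Otimes>\<^sub>M M2) (\<lambda>z. C * indicator (A \<times> B) z)"
    using AB fin by (intro integrable_mult_right integrable_real_indicator) auto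
  have int: "integrable (M1 \<Otimes>\<^sub>M M2) (\<lambda>(u, s). h u s)"
  proof (rule Bochner_Integration.integrable_bound[OF ib m])
    show "AE z in M1 \<Otimes>\<^sub>M M2. norm ((\<lambda>(u, s). h u s) z) \<le> norm (C * indicator (A \<times> B) z)"
    proof (intro AE_I2)
      fix z :: "real \<times> real"
      obtain u s where z: "z = (u, s)" by (cases z)
      have "\<bar>h u s\<bar> \<le> C * indicator (A \<times> B) (u, s)" by (rule bnd)
      also have "\<dots> \<le> \<bar>C * indicator (A \<times> B) (u, s)\<bar>" by (rule abs_ge_self)
      finally show "norm ((\<lambda>(u, s). h u s) z) \<le> norm (C * indicator (A \<times> B) z)" unfolding z by simp
    qed
  qed
  show "(\<integral>u. (\<integral>s. h u s \<partial>M2) \<partial>M1) = (\<integral>s. (\<integral>u. h u s \<partial>M1) \<partial>M2)"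
    using P.Fubini_integral[OF int] by simp
  show "integrable M1 (\<lambda>u. \<integral>s. h u s \<partial>M2)"
    using P.integrable_fst[OF int] by simp
  show "integrable M2 (\<lambda>s. \<integral>u. h u s \<partial>M1)"
    using P.integrable_snd[OF int] by simp
qed

lemma integrable_bsupp:
  fixes g :: "real \<Rightarrow> real" and M :: "real measure"
  assumes sM: "sets M = sets borel" and g: "g \<in> borel_measurable borel"
    and S: "S \<in> sets borel" "emeasure M S < \<infinity>" and bnd: "\<And>s. \<bar>g s\<bar> \<le> C * indicator S s"
  shows "integrable M g"
proof -
  have gm: "g \<in> borel_measurable M" using g measurable_cong_sets[OF sM refl] by blast
  have SM: "S \<in> sets M" using S sM by simp
  have "integrable M (\<lambda>s. C * indicator S s)"
    using SM S by (intro integrable_mult_right integrable_real_indicator) auto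
  then show ?thesis
  proof (rule Bochner_Integration.integrable_bound[OF _ gm], intro AE_I2)
    fix s
    have "\<bar>g s\<bar> \<le> C * indicator S s" by (rule bnd)
    also have "\<dots> \<le> \<bar>C * indicator S s\<bar>" by (rule abs_ge_self)
    finally show "norm (g s) \<le> norm (C * indicator S s :: real)" by simp
  qed
qed

lemma lborel_point_int: "(\<integral>u. indicator {a::real..a} u * (f::real\<Rightarrow>real) u \<partial>lborel) = 0"
proof -
  have "(\<integral>u. indicator {a::real..a} u * f u \<partial>lborel) = (\<integral>u. indicator {a..a} u * f a \<partial>lborel)"
    by (rule Bochner_Integration.integral_cong) (auto simp: indicator_def)
  also have "\<dots> = 0" by simp
  finally show ?thesis .
qed

locale cdg_path =
  fixes p q r e cm cn :: real and fm fn :: "real \<Rightarrow> real" and N :: "real measure"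
    and phi x :: "real \<Rightarrow> real"
  assumes pq: "0 \<le> p" "0 \<le> q" and rdef: "r = max p q"
    and cm: "cm \<ge> 0" and cn: "cn \<ge> 0"
    and fm_cont: "continuous_on {-p..0} fm" and fm_pos: "\<And>u. fm u \<ge> 0"
    and fm_supp: "\<And>u. u \<notin> {-p..0} \<Longrightarrow> fm u = 0"
    and fn_cont: "continuous_on {-q..0} fn" and fn_pos: "\<And>u. fn u \<ge> 0"
    and fn_supp: "\<And>u. u \<notin> {-q..0} \<Longrightarrow> fn u = 0"
    and N_sets: "sets N = sets borel" and N_fin: "\<And>a b. emeasure N {a<..b} < \<infinity>"
    and cad: "cadlag_from (-r) x"
    and init: "\<And>t. t \<in> {-r..0} \<Longrightarrow> x t = phi t"
    and eq: "\<And>t. t > 0 \<Longrightarrow> cdgarch_eq p q e cm cn fm fn N phi x t"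
begin

lemma r_ge: "p \<le> r" "q \<le> r" "0 \<le> r" using pq rdef by auto

lemma N_sf: "sigma_finite_measure N" by (rule sigma_finite_Ioc[OF N_sets N_fin])

lemma fm_meas: "fm \<in> borel_measurable borel"
proof -
  have "(\<lambda>u. indicator {-p..0} u *\<^sub>R fm u) \<in> borel_measurable borel"
    by (intro borel_measurable_continuous_on_indicator fm_cont) auto
  moreover have "(\<lambda>u. indicator {-p..0} u *\<^sub>R fm u) = fm"
    using fm_supp by (auto simp: indicator_def fun_eq_iff)
  ultimately show ?thesis by simp
qed

lemma fn_meas: "fn \<in> borel_measurable borel"
proof -
  have "(\<lambda>u. indicator {-q..0} u *\<^sub>R fn u) \<in> borel_measurable borel"
    by (intro borel_measurable_continuous_on_indicator fn_cont) auto
  moreover have "(\<lambda>u. indicator {-q..0} u *\<^sub>R fn u) = fn"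
    using fn_supp by (auto simp: indicator_def fun_eq_iff)
  ultimately show ?thesis by simp
qed

lemma fm_bnd: "\<exists>C. \<forall>u. fm u \<le> C"
proof -
  have "compact (fm ` {-p..0})" by (intro compact_continuous_image fm_cont) simp
  then obtain B where B: "\<forall>y\<in>fm ` {-p..0}. norm y \<le> B"
    using compact_imp_bounded bounded_iff by metis
  show ?thesis
  proof (intro exI allI)
    fix u show "fm u \<le> max B 0"
      using B fm_supp[of u] by (cases "u \<in> {-p..0}") force+
  qed
qed

lemma fn_bnd: "\<exists>C. \<forall>u. fn u \<le> C"
proof -
  have "compact (fn ` {-q..0})" by (intro compact_continuous_image fn_cont) simp
  then obtain B where B: "\<forall>y\<in>fn ` {-q..0}. norm y \<le> B"
    using compact_imp_bounded bounded_iff by metis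
  show ?thesis
  proof (intro exI allI)
    fix u show "fn u \<le> max B 0"
      using B fn_supp[of u] by (cases "u \<in> {-q..0}") force+
  qed
qed

definition "X0 s = indicator {-r..} s * x s"
definition "XL s = indicator {-r<..} s * lim_left x s"

lemma X0_meas: "X0 \<in> borel_measurable borel"
  unfolding X0_def[abs_def] by (rule cadlag_meas[OF cad])

lemma XL_meas: "XL \<in> borel_measurable borel"
  unfolding XL_def[abs_def] by (rule cadlag_meas_lim_left[OF cad])

lemma X0_eq: "s \<ge> -r \<Longrightarrow> X0 s = x s" by (simp add: X0_def)
lemma XL_eq: "s > -r \<Longrightarrow> XL s = lim_left x s" by (simp add: XL_def)

lemma x_bnd: "\<exists>K. (\<forall>s\<in>{-r..T}. \<bar>x s\<bar> \<le> K) \<and> (\<forall>s\<in>{-r<..T}. \<bar>lim_left x s\<bar> \<le> K)"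
proof -
  obtain K where K: "\<forall>s\<in>{-r..T}. \<bar>x s\<bar> \<le> K" using cadlag_bounded[OF cad] by blast
  then show ?thesis using cadlag_lim_left_bounded[OF cad K] by blast
qed

end

lemma lborel_Icc_fin: "emeasure lborel {a..b::real} < \<infinity>"
  by (cases "a \<le> b") auto

lemma Fker_alt: "Fker f p t s = (\<integral>u. indicator {max (-p) (s - t)..min s 0} u * f u \<partial>lborel)"
  unfolding Fker_def set_lebesgue_integral_def by simp

lemma Fker_meas:
  fixes f :: "real \<Rightarrow> real"
  assumes fm[measurable]: "f \<in> borel_measurable borel"
  shows "(\<lambda>s. Fker f p t s) \<in> borel_measurable borel"
proof -
  have m: "(\<lambda>(s, u). (if -p \<le> u \<and> s - t \<le> u \<and> u \<le> s \<and> u \<le> 0 then 1 else 0) * f u) \<in> borel_measurable (borel \<Otimes>\<^sub>M borel)"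
    by measurable
  have se: "sets (borel \<Otimes>\<^sub>M lborel) = sets (borel \<Otimes>\<^sub>M (borel :: real measure))"
    by (rule sets_pair_measure_cong) simp_all
  have m': "(\<lambda>(s, u). (if -p \<le> u \<and> s - t \<le> u \<and> u \<le> s \<and> u \<le> 0 then 1 else 0) * f u) \<in> borel_measurable (borel \<Otimes>\<^sub>M lborel)"
    using m measurable_cong_sets[OF se refl] by blast
  have "(\<lambda>s. \<integral>u. (if -p \<le> u \<and> s - t \<le> u \<and> u \<le> s \<and> u \<le> 0 then 1 else 0) * f u \<partial>lborel) \<in> borel_measurable borel"
    using lborel.borel_measurable_lebesgue_integral[OF m'] by simp
  moreover have "(\<lambda>s. \<integral>u. (if -p \<le> u \<and> s - t \<le> u \<and> u \<le> s \<and> u \<le> 0 then 1 else 0) * f u \<partial>lborel) = (\<lambda>s. Fker f p t s)"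
    unfolding Fker_alt by (intro ext Bochner_Integration.integral_cong) (simp_all add: indicator_def)
  ultimately show ?thesis by simp
qed

lemma Fker_int:
  fixes f :: "real \<Rightarrow> real"
  assumes fm: "f \<in> borel_measurable borel" and fb: "\<And>u. \<bar>f u\<bar> \<le> C"
  shows "integrable lborel (\<lambda>u. indicator {a..b} u * f u)"
proof (rule integrable_bsupp[where C=C and S="{a..b}"])
  show "sets lborel = sets borel" by simp
  show "(\<lambda>u. indicator {a..b} u * f u) \<in> borel_measurable borel" using fm by measurable
  show "{a..b} \<in> sets borel" by simp
  show "emeasure lborel {a..b} < \<infinity>" by (rule lborel_Icc_fin)
  fix s show "\<bar>indicator {a..b} s * f s\<bar> \<le> C * indicator {a..b} s"
    using fb[of s] by (simp add: indicator_def)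
qed

lemma Fker_nonneg:
  fixes f :: "real \<Rightarrow> real"
  assumes pos: "\<And>u. f u \<ge> 0"
  shows "0 \<le> Fker f p t s"
  unfolding Fker_alt by (rule integral_nonneg_AE) (use pos in auto)

lemma Fker_mono:
  fixes f :: "real \<Rightarrow> real"
  assumes fm: "f \<in> borel_measurable borel" and fb: "\<And>u. \<bar>f u\<bar> \<le> C" and pos: "\<And>u. f u \<ge> 0"
    and tt: "t \<le> t'"
  shows "Fker f p t s \<le> Fker f p t' s"
  unfolding Fker_alt
proof (rule integral_mono)
  show "integrable lborel (\<lambda>u. indicator {max (-p) (s - t)..min s 0} u * f u)"
    by (rule Fker_int[OF fm fb])
  show "integrable lborel (\<lambda>u. indicator {max (-p) (s - t')..min s 0} u * f u)"
    by (rule Fker_int[OF fm fb])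
  fix u
  show "indicator {max (-p) (s - t)..min s 0} u * f u \<le> indicator {max (-p) (s - t')..min s 0} u * f u"
  proof -
    have "max (-p) (s - t') \<le> max (-p) (s - t)" using tt by (simp add: max_def)
    then have sub: "{max (-p) (s - t)..min s 0} \<subseteq> {max (-p) (s - t')..min s 0}" by auto
    show ?thesis
    proof (cases "u \<in> {max (-p) (s - t)..min s 0}")
      case True
      then have "u \<in> {max (-p) (s - t')..min s 0}" using sub by blast
      then show ?thesis using True by simp
    next
      case False
      then show ?thesis using pos[of u] by simp
    qed
  qed
qed

lemma Fker_le:
  fixes f :: "real \<Rightarrow> real"
  assumes fm: "f \<in> borel_measurable borel" and fb: "\<And>u. \<bar>f u\<bar> \<le> C" and pos: "\<And>u. f u \<ge> 0"
    and p: "p \<ge> 0"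
  shows "Fker f p t s \<le> C * p"
proof -
  have "Fker f p t s \<le> (\<integral>u. C * indicator {-p..0} u \<partial>lborel)"
    unfolding Fker_alt
  proof (rule integral_mono)
    show "integrable lborel (\<lambda>u. indicator {max (-p) (s - t)..min s 0} u * f u)"
      by (rule Fker_int[OF fm fb])
    show "integrable lborel (\<lambda>u. C * indicator {-p..0} u)"
      using lborel_Icc_fin by (intro integrable_mult_right integrable_real_indicator) auto
    fix u
    show "indicator {max (-p) (s - t)..min s 0} u * f u \<le> C * indicator {-p..0} u"
    proof (cases "u \<in> {max (-p) (s - t)..min s 0}")
      case True
      then have "u \<in> {-p..0}" by auto
      then show ?thesis using True fb[of u] by simp
    next
      case False
      have "0 \<le> C" using fb[of u] by linarith
      then show ?thesis using False by simp
    qed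
  qed
  also have "\<dots> = C * p" using p by simp
  finally show ?thesis .
qed

lemma bnd_if:
  fixes a b C K :: real
  assumes "P \<Longrightarrow> \<bar>a\<bar> \<le> C" "P \<Longrightarrow> \<bar>b\<bar> \<le> K" "0 \<le> C" "0 \<le> K" "P \<Longrightarrow> z \<in> S"
  shows "\<bar>(if P then 1 else 0) * a * b\<bar> \<le> (C * K) * indicator S z"
proof (cases P)
  case True
  have "\<bar>a * b\<bar> \<le> C * K" unfolding abs_mult using assms True by (intro mult_mono) auto
  then show ?thesis using True assms by simp
next
  case False then show ?thesis using assms by simp
qed

lemma fub_mu:
  fixes f y :: "real \<Rightarrow> real"
  assumes fm[measurable]: "f \<in> borel_measurable borel" and fb: "\<And>u. \<bar>f u\<bar> \<le> C"
    and ym[measurable]: "y \<in> borel_measurable borel" and yb: "\<And>s. s \<in> {-p..t} \<Longrightarrow> \<bar>y s\<bar> \<le> K"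
    and K: "0 \<le> K"
  shows "(LBINT u:{-p..0}. f u * (LBINT s:{u..t+u}. y s)) = (LBINT s:{-p..t}. Fker f p t s * y s)"
    and "integrable lborel (\<lambda>s. indicator {-p..t} s * (Fker f p t s * y s))"
proof -
  define h where "h u s = (if -p \<le> u \<and> u \<le> 0 \<and> u \<le> s \<and> s \<le> t + u then 1 else 0) * f u * y s" for u s
  have C: "0 \<le> C" using fb[of 0] by linarith
  have hm: "(\<lambda>(u, s). h u s) \<in> borel_measurable (borel \<Otimes>\<^sub>M borel)"
    unfolding h_def by measurable
  have hb: "\<bar>h u s\<bar> \<le> (C * K) * indicator ({-p..0} \<times> {-p..t}) (u, s)" for u s
    unfolding h_def by (rule bnd_if) (use fb yb C K in auto)
  have sf: "sigma_finite_measure lborel" by (rule lborel.sigma_finite_measure_axioms)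
  have A1: "{-p..0} \<in> sets borel" "{-p..t} \<in> sets borel" by simp_all
  note fr = fubini_rect[OF sf sf sets_lborel sets_lborel hm A1(1) lborel_Icc_fin A1(2) lborel_Icc_fin hb]
  have L: "(\<integral>s. h u s \<partial>lborel) = indicator {-p..0} u * (f u * (LBINT s:{u..t+u}. y s))" for u
  proof -
    have "(\<integral>s. h u s \<partial>lborel) = (\<integral>s. (indicator {-p..0} u * f u) * (indicator {u..t+u} s * y s) \<partial>lborel)"
      unfolding h_def by (intro Bochner_Integration.integral_cong) (auto simp: indicator_def)
    also have "\<dots> = (indicator {-p..0} u * f u) * (\<integral>s. indicator {u..t+u} s * y s \<partial>lborel)"
      by (rule integral_mult_right_zero)
    finally show ?thesis unfolding set_lebesgue_integral_def by simp
  qed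
  have R: "(\<integral>u. h u s \<partial>lborel) = indicator {-p..t} s * (Fker f p t s * y s)" for s
  proof -
    have "(\<integral>u. h u s \<partial>lborel) = (\<integral>u. (indicator {max (-p) (s - t)..min s 0} u * f u) * y s \<partial>lborel)"
      unfolding h_def by (intro Bochner_Integration.integral_cong) (auto simp: indicator_def)
    also have "\<dots> = Fker f p t s * y s"
      unfolding Fker_alt by (rule integral_mult_left_zero)
    also have "\<dots> = indicator {-p..t} s * (Fker f p t s * y s)"
    proof (cases "s \<in> {-p..t}")
      case False
      then have "{max (-p) (s - t)..min s 0} = {}" by auto
      then have "Fker f p t s = 0" unfolding Fker_alt by simp
      then show ?thesis by simp
    qed simp
    finally show ?thesis .
  qed
  have "(LBINT u:{-p..0}. f u * (LBINT s:{u..t+u}. y s)) = (\<integral>u. (\<integral>s. h u s \<partial>lborel) \<partial>lborel)"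
    unfolding L set_lebesgue_integral_def by simp
  also have "\<dots> = (\<integral>s. (\<integral>u. h u s \<partial>lborel) \<partial>lborel)"
    by (rule fr(1))
  also have "\<dots> = (LBINT s:{-p..t}. Fker f p t s * y s)"
    unfolding R set_lebesgue_integral_def by simp
  finally show "(LBINT u:{-p..0}. f u * (LBINT s:{u..t+u}. y s)) = (LBINT s:{-p..t}. Fker f p t s * y s)" .
  have "integrable lborel (\<lambda>s. \<integral>u. h u s \<partial>lborel)"
    by (rule fr(3))
  then show "integrable lborel (\<lambda>s. indicator {-p..t} s * (Fker f p t s * y s))"
    unfolding R .
qed

lemma fub_nu:
  fixes f y :: "real \<Rightarrow> real" and N :: "real measure"
  assumes sN: "sets N = sets borel" and finN: "\<And>a b. emeasure N {a<..b} < \<infinity>"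
    and fm[measurable]: "f \<in> borel_measurable borel" and fb: "\<And>u. \<bar>f u\<bar> \<le> C"
    and ym[measurable]: "y \<in> borel_measurable borel" and yb: "\<And>s. s \<in> {-q<..t} \<Longrightarrow> \<bar>y s\<bar> \<le> K"
    and K: "0 \<le> K"
  shows "(LBINT u:{-q..0}. f u * (LINT s:{u<..t+u}|N. y s)) = (LINT s:{-q<..t}|N. Fker f q t s * y s)"
    and "integrable N (\<lambda>s. indicator {-q<..t} s * (Fker f q t s * y s))"
proof -
  define h where "h u s = (if -q \<le> u \<and> u \<le> 0 \<and> u < s \<and> s \<le> t + u then 1 else 0) * f u * y s" for u s
  have C: "0 \<le> C" using fb[of 0] by linarith
  have hm: "(\<lambda>(u, s). h u s) \<in> borel_measurable (borel \<Otimes>\<^sub>M borel)"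
    unfolding h_def by measurable
  have hb: "\<bar>h u s\<bar> \<le> (C * K) * indicator ({-q..0} \<times> {-q<..t}) (u, s)" for u s
    unfolding h_def by (rule bnd_if) (use fb yb C K in auto)
  have sf: "sigma_finite_measure lborel" by (rule lborel.sigma_finite_measure_axioms)
  have sfN: "sigma_finite_measure N" by (rule sigma_finite_Ioc[OF sN finN])
  have A1: "{-q..0} \<in> sets borel" "{-q<..t} \<in> sets borel" by simp_all
  note fr = fubini_rect[OF sf sfN sets_lborel sN hm A1(1) lborel_Icc_fin A1(2) finN hb]
  have L: "(\<integral>s. h u s \<partial>N) = indicator {-q..0} u * (f u * (LINT s:{u<..t+u}|N. y s))" for u
  proof -
    have "(\<integral>s. h u s \<partial>N) = (\<integral>s. (indicator {-q..0} u * f u) * (indicator {u<..t+u} s * y s) \<partial>N)"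
      unfolding h_def by (intro Bochner_Integration.integral_cong) (auto simp: indicator_def)
    also have "\<dots> = (indicator {-q..0} u * f u) * (\<integral>s. indicator {u<..t+u} s * y s \<partial>N)"
      by (rule integral_mult_right_zero)
    finally show ?thesis unfolding set_lebesgue_integral_def by simp
  qed
  have R: "(\<integral>u. h u s \<partial>lborel) = indicator {-q<..t} s * (Fker f q t s * y s)" for s
  proof (cases "s \<in> {-q<..t}")
    case True
    have "(\<integral>u. h u s \<partial>lborel) = (\<integral>u. ((if -q \<le> u \<and> u \<le> 0 \<and> u < s \<and> s \<le> t + u then 1 else 0) * f u) * y s \<partial>lborel)"
      unfolding h_def ..
    also have "\<dots> = (\<integral>u. (if -q \<le> u \<and> u \<le> 0 \<and> u < s \<and> s \<le> t + u then 1 else 0) * f u \<partial>lborel) * y s"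
      by (rule integral_mult_left_zero)
    also have "(\<integral>u. (if -q \<le> u \<and> u \<le> 0 \<and> u < s \<and> s \<le> t + u then 1 else 0) * f u \<partial>lborel)
       = (\<integral>u. indicator {max (-q) (s - t)..min s 0} u * f u \<partial>lborel)"
    proof (rule integral_cong_AE)
      show "(\<lambda>u. (if -q \<le> u \<and> u \<le> 0 \<and> u < s \<and> s \<le> t + u then 1 else 0) * f u) \<in> borel_measurable lborel"
        by measurable
      show "(\<lambda>u. indicator {max (-q) (s - t)..min s 0} u * f u) \<in> borel_measurable lborel"
        by measurable
      show "AE u in lborel. (if -q \<le> u \<and> u \<le> 0 \<and> u < s \<and> s \<le> t + u then 1 else 0) * f u
               = indicator {max (-q) (s - t)..min s 0} u * f u"
        using AE_lborel_singleton[of s]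
      proof (rule eventually_mono)
        fix u :: real assume "u \<noteq> s"
        then have "(-q \<le> u \<and> u \<le> 0 \<and> u < s \<and> s \<le> t + u) = (u \<in> {max (-q) (s - t)..min s 0})"
          using True by auto
        then show "(if -q \<le> u \<and> u \<le> 0 \<and> u < s \<and> s \<le> t + u then 1 else 0) * f u
               = indicator {max (-q) (s - t)..min s 0} u * f u"
          by (simp add: indicator_def)
      qed
    qed
    finally show ?thesis using True unfolding Fker_alt by simp
  next
    case False
    have "h u s = 0" for u unfolding h_def using False by auto
    then show ?thesis using False by simp
  qed
  have "(LBINT u:{-q..0}. f u * (LINT s:{u<..t+u}|N. y s)) = (\<integral>u. (\<integral>s. h u s \<partial>N) \<partial>lborel)"
    unfolding L set_lebesgue_integral_def by simp
  also have "\<dots> = (\<integral>s. (\<integral>u. h u s \<partial>lborel) \<partial>N)"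
    by (rule fr(1))
  also have "\<dots> = (LINT s:{-q<..t}|N. Fker f q t s * y s)"
    unfolding R set_lebesgue_integral_def by simp
  finally show "(LBINT u:{-q..0}. f u * (LINT s:{u<..t+u}|N. y s)) = (LINT s:{-q<..t}|N. Fker f q t s * y s)" .
  have "integrable N (\<lambda>s. \<integral>u. h u s \<partial>lborel)"
    by (rule fr(3))
  then show "integrable N (\<lambda>s. indicator {-q<..t} s * (Fker f q t s * y s))"
    unfolding R .
qed

lemma fub_A:
  fixes f y :: "real \<Rightarrow> real"
  assumes fm[measurable]: "f \<in> borel_measurable borel" and fb: "\<And>u. \<bar>f u\<bar> \<le> C"
    and ym[measurable]: "y \<in> borel_measurable borel" and yb: "\<And>s. s \<in> {-p..t} \<Longrightarrow> \<bar>y s\<bar> \<le> K"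
    and K: "0 \<le> K"
  shows "(LBINT v:{0..t}. (LBINT u:{-p..0}. f u * y (v + u))) = (LBINT u:{-p..0}. f u * (LBINT s:{u..t+u}. y s))"
    and "integrable lborel (\<lambda>v. indicator {0..t} v * (LBINT u:{-p..0}. f u * y (v + u)))"
proof -
  define h where "h v u = (if 0 \<le> v \<and> v \<le> t \<and> -p \<le> u \<and> u \<le> 0 then 1 else 0) * f u * y (v + u)" for v u
  have C: "0 \<le> C" using fb[of 0] by linarith
  have hm: "(\<lambda>(v, u). h v u) \<in> borel_measurable (borel \<Otimes>\<^sub>M borel)"
    unfolding h_def by measurable
  have hb: "\<bar>h v u\<bar> \<le> (C * K) * indicator ({0..t} \<times> {-p..0}) (v, u)" for v u
    unfolding h_def by (rule bnd_if) (use fb yb C K in auto)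
  have sf: "sigma_finite_measure lborel" by (rule lborel.sigma_finite_measure_axioms)
  have A1: "{0..t} \<in> sets borel" "{-p..0} \<in> sets borel" by simp_all
  note fr = fubini_rect[OF sf sf sets_lborel sets_lborel hm A1(1) lborel_Icc_fin A1(2) lborel_Icc_fin hb]
  have L: "(\<integral>u. h v u \<partial>lborel) = indicator {0..t} v * (LBINT u:{-p..0}. f u * y (v + u))" for v
  proof -
    have "(\<integral>u. h v u \<partial>lborel) = (\<integral>u. indicator {0..t} v * (indicator {-p..0} u * (f u * y (v + u))) \<partial>lborel)"
      unfolding h_def by (intro Bochner_Integration.integral_cong) (auto simp: indicator_def)
    also have "\<dots> = indicator {0..t} v * (\<integral>u. indicator {-p..0} u * (f u * y (v + u)) \<partial>lborel)"
      by (rule integral_mult_right_zero)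
    finally show ?thesis unfolding set_lebesgue_integral_def by simp
  qed
  have R: "(\<integral>v. h v u \<partial>lborel) = indicator {-p..0} u * (f u * (LBINT s:{u..t+u}. y s))" for u
  proof -
    have "(\<integral>v. h v u \<partial>lborel) = (\<integral>v. (indicator {-p..0} u * f u) * (indicator {0..t} v * y (v + u)) \<partial>lborel)"
      unfolding h_def by (intro Bochner_Integration.integral_cong) (auto simp: indicator_def)
    also have "\<dots> = (indicator {-p..0} u * f u) * (\<integral>v. indicator {0..t} v * y (v + u) \<partial>lborel)"
      by (rule integral_mult_right_zero)
    also have "(\<integral>v. indicator {0..t} v * y (v + u) \<partial>lborel) = (\<integral>s. indicator {u..t+u} s * y s \<partial>lborel)"
    proof -
      have "(\<integral>s. indicator {u..t+u} s * y s \<partial>lborel) = \<bar>1\<bar> *\<^sub>R (\<integral>v. indicator {u..t+u} (u + 1 * v) * y (u + 1 * v) \<partial>lborel)"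
        by (rule lborel_integral_real_affine) simp
      also have "\<dots> = (\<integral>v. indicator {0..t} v * y (v + u) \<partial>lborel)"
        by (simp add: indicator_def add.commute)
      finally show ?thesis by simp
    qed
    finally show ?thesis unfolding set_lebesgue_integral_def by simp
  qed
  have "(LBINT v:{0..t}. (LBINT u:{-p..0}. f u * y (v + u))) = (\<integral>v. (\<integral>u. h v u \<partial>lborel) \<partial>lborel)"
    unfolding L set_lebesgue_integral_def by simp
  also have "\<dots> = (\<integral>u. (\<integral>v. h v u \<partial>lborel) \<partial>lborel)"
    by (rule fr(1))
  also have "\<dots> = (LBINT u:{-p..0}. f u * (LBINT s:{u..t+u}. y s))"
    unfolding R set_lebesgue_integral_def by simp
  finally show "(LBINT v:{0..t}. (LBINT u:{-p..0}. f u * y (v + u))) = (LBINT u:{-p..0}. f u * (LBINT s:{u..t+u}. y s))" .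
  have "integrable lborel (\<lambda>v. \<integral>u. h v u \<partial>lborel)"
    by (rule fr(2))
  then show "integrable lborel (\<lambda>v. indicator {0..t} v * (LBINT u:{-p..0}. f u * y (v + u)))"
    unfolding L .
qed

lemma fub_B:
  fixes f y :: "real \<Rightarrow> real" and N :: "real measure"
  assumes sN: "sets N = sets borel" and finN: "\<And>a b. emeasure N {a<..b} < \<infinity>"
    and fm[measurable]: "f \<in> borel_measurable borel" and fb: "\<And>u. \<bar>f u\<bar> \<le> C"
    and ym[measurable]: "y \<in> borel_measurable borel" and yb: "\<And>s. s \<in> {-q<..t} \<Longrightarrow> \<bar>y s\<bar> \<le> K"
    and K: "0 \<le> K" and q: "0 \<le> q"
  shows "(LBINT v:{0..t}. (LINT w:{v-q<..v}|N. f (w - v) * y w)) = (LINT s:{-q<..t}|N. Fker f q t s * y s)"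
    and "integrable lborel (\<lambda>v. indicator {0..t} v * (LINT w:{v-q<..v}|N. f (w - v) * y w))"
proof -
  define h where "h v w = (if 0 \<le> v \<and> v \<le> t \<and> v - q < w \<and> w \<le> v then 1 else 0) * f (w - v) * y w" for v w
  have C: "0 \<le> C" using fb[of 0] by linarith
  have hm: "(\<lambda>(v, w). h v w) \<in> borel_measurable (borel \<Otimes>\<^sub>M borel)"
    unfolding h_def by measurable
  have hb: "\<bar>h v w\<bar> \<le> (C * K) * indicator ({0..t} \<times> {-q<..t}) (v, w)" for v w
    unfolding h_def by (rule bnd_if) (use fb yb C K q in auto)
  have sf: "sigma_finite_measure lborel" by (rule lborel.sigma_finite_measure_axioms)
  have sfN: "sigma_finite_measure N" by (rule sigma_finite_Ioc[OF sN finN])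
  have A1: "{0..t} \<in> sets borel" "{-q<..t} \<in> sets borel" by simp_all
  note fr = fubini_rect[OF sf sfN sets_lborel sN hm A1(1) lborel_Icc_fin A1(2) finN hb]
  have L: "(\<integral>w. h v w \<partial>N) = indicator {0..t} v * (LINT w:{v-q<..v}|N. f (w - v) * y w)" for v
  proof -
    have "(\<integral>w. h v w \<partial>N) = (\<integral>w. indicator {0..t} v * (indicator {v-q<..v} w * (f (w - v) * y w)) \<partial>N)"
      unfolding h_def by (intro Bochner_Integration.integral_cong) (auto simp: indicator_def)
    also have "\<dots> = indicator {0..t} v * (\<integral>w. indicator {v-q<..v} w * (f (w - v) * y w) \<partial>N)"
      by (rule integral_mult_right_zero)
    finally show ?thesis unfolding set_lebesgue_integral_def by simp
  qed
  have R: "(\<integral>v. h v w \<partial>lborel) = indicator {-q<..t} w * (Fker f q t w * y w)" for w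
  proof -
    have "(\<integral>v. h v w \<partial>lborel) = (\<integral>v. ((if 0 \<le> v \<and> v \<le> t \<and> v - q < w \<and> w \<le> v then 1 else 0) * f (w - v)) * y w \<partial>lborel)"
      unfolding h_def ..
    also have "\<dots> = (\<integral>v. (if 0 \<le> v \<and> v \<le> t \<and> v - q < w \<and> w \<le> v then 1 else 0) * f (w - v) \<partial>lborel) * y w"
      by (rule integral_mult_left_zero)
    also have "(\<integral>v. (if 0 \<le> v \<and> v \<le> t \<and> v - q < w \<and> w \<le> v then 1 else 0) * f (w - v) \<partial>lborel)
       = (\<integral>u. (if u \<le> w \<and> w - t \<le> u \<and> -q < u \<and> u \<le> 0 then 1 else 0) * f u \<partial>lborel)"
    proof -
      define G where "G v = (if 0 \<le> v \<and> v \<le> t \<and> v - q < w \<and> w \<le> v then 1 else 0) * f (w - v)" for v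
      have aff: "(\<integral>v. G v \<partial>lborel) = \<bar>-1::real\<bar> *\<^sub>R (\<integral>u. G (w + -1 * u) \<partial>lborel)"
        by (rule lborel_integral_real_affine) simp
      have "(\<integral>u. G (w + -1 * u) \<partial>lborel) = (\<integral>u. (if u \<le> w \<and> w - t \<le> u \<and> -q < u \<and> u \<le> 0 then 1 else 0) * f u \<partial>lborel)"
        by (intro Bochner_Integration.integral_cong) (auto simp: G_def)
      then show ?thesis using aff unfolding G_def by simp
    qed
    also have "\<dots> = (\<integral>u. indicator {-q<..t} w * (indicator {max (-q) (w - t)..min w 0} u * f u) \<partial>lborel)"
    proof (rule integral_cong_AE)
      show "(\<lambda>u. (if u \<le> w \<and> w - t \<le> u \<and> -q < u \<and> u \<le> 0 then 1 else 0) * f u) \<in> borel_measurable lborel"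
        by measurable
      show "(\<lambda>u. indicator {-q<..t} w * (indicator {max (-q) (w - t)..min w 0} u * f u)) \<in> borel_measurable lborel"
        by measurable
      show "AE u in lborel. (if u \<le> w \<and> w - t \<le> u \<and> -q < u \<and> u \<le> 0 then 1 else 0) * f u
               = indicator {-q<..t} w * (indicator {max (-q) (w - t)..min w 0} u * f u)"
        using AE_lborel_singleton[of "-q"]
      proof (rule eventually_mono)
        fix u :: real assume "u \<noteq> -q"
        then have "(u \<le> w \<and> w - t \<le> u \<and> -q < u \<and> u \<le> 0) = (w \<in> {-q<..t} \<and> u \<in> {max (-q) (w - t)..min w 0})"
          by auto
        then show "(if u \<le> w \<and> w - t \<le> u \<and> -q < u \<and> u \<le> 0 then 1 else 0) * f u
               = indicator {-q<..t} w * (indicator {max (-q) (w - t)..min w 0} u * f u)"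
          by (simp add: indicator_def)
      qed
    qed
    also have "\<dots> = indicator {-q<..t} w * Fker f q t w"
      unfolding Fker_alt by (rule integral_mult_right_zero)
    finally show ?thesis by simp
  qed
  have "(LBINT v:{0..t}. (LINT w:{v-q<..v}|N. f (w - v) * y w)) = (\<integral>v. (\<integral>w. h v w \<partial>N) \<partial>lborel)"
    unfolding L set_lebesgue_integral_def by simp
  also have "\<dots> = (\<integral>w. (\<integral>v. h v w \<partial>lborel) \<partial>N)"
    by (rule fr(1))
  also have "\<dots> = (LINT s:{-q<..t}|N. Fker f q t s * y s)"
    unfolding R set_lebesgue_integral_def by simp
  finally show "(LBINT v:{0..t}. (LINT w:{v-q<..v}|N. f (w - v) * y w)) = (LINT s:{-q<..t}|N. Fker f q t s * y s)" .
  have "integrable lborel (\<lambda>v. \<integral>w. h v w \<partial>N)"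
    by (rule fr(2))
  then show "integrable lborel (\<lambda>v. indicator {0..t} v * (LINT w:{v-q<..v}|N. f (w - v) * y w))"
    unfolding L .
qed

context cdg_path
begin

lemma fm_abs: "\<exists>C. \<forall>u. \<bar>fm u\<bar> \<le> C"
proof -
  obtain C where "\<forall>u. fm u \<le> C" using fm_bnd by blast
  then have "\<forall>u. \<bar>fm u\<bar> \<le> C" using fm_pos by simp
  then show ?thesis ..
qed

lemma fn_abs: "\<exists>C. \<forall>u. \<bar>fn u\<bar> \<le> C"
proof -
  obtain C where "\<forall>u. fn u \<le> C" using fn_bnd by blast
  then have "\<forall>u. \<bar>fn u\<bar> \<le> C" using fn_pos by simp
  then show ?thesis ..
qed

lemma K_bnd:
  assumes "T \<ge> 0"
  obtains K where "0 \<le> K" "\<And>s. s \<in> {-r..T} \<Longrightarrow> \<bar>x s\<bar> \<le> K"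
    "\<And>s. s \<in> {-r<..T} \<Longrightarrow> \<bar>lim_left x s\<bar> \<le> K"
proof -
  obtain K where K: "\<forall>s\<in>{-r..T}. \<bar>x s\<bar> \<le> K" "\<forall>s\<in>{-r<..T}. \<bar>lim_left x s\<bar> \<le> K"
    using x_bnd by blast
  have "-r \<in> {-r..T}" using assms r_ge by simp
  then have "\<bar>x (-r)\<bar> \<le> K" using K(1) by blast
  then have K0: "0 \<le> K" by linarith
  show ?thesis
  proof (rule that)
    show "0 \<le> K" by (rule K0)
    show "\<bar>x s\<bar> \<le> K" if "s \<in> {-r..T}" for s using K(1) that by blast
    show "\<bar>lim_left x s\<bar> \<le> K" if "s \<in> {-r<..T}" for s using K(2) that by blast
  qed
qed

lemma int_x:
  assumes "0 \<le> t"
  shows "integrable lborel (\<lambda>s. indicator {0..t} s * x s)"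
proof -
  obtain K where K: "0 \<le> K" "\<And>s. s \<in> {-r..t} \<Longrightarrow> \<bar>x s\<bar> \<le> K"
    "\<And>s. s \<in> {-r<..t} \<Longrightarrow> \<bar>lim_left x s\<bar> \<le> K" by (rule K_bnd[OF assms]) blast
  have "integrable lborel (\<lambda>s. indicator {0..t} s * X0 s)"
  proof (rule integrable_bsupp[where C=K and S="{0..t}"])
    show "sets lborel = sets borel" by simp
    show "(\<lambda>s. indicator {0..t} s * X0 s) \<in> borel_measurable borel"
      by (intro borel_measurable_times borel_measurable_indicator X0_meas) simp
    show "{0..t} \<in> sets borel" by simp
    show "emeasure lborel {0..t} < \<infinity>" by (rule lborel_Icc_fin)
    fix s show "\<bar>indicator {0..t} s * X0 s\<bar> \<le> K * indicator {0..t} s"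
    proof (cases "s \<in> {0..t}")
      case True
      then have "s \<in> {-r..t}" "s \<ge> -r" using r_ge by auto
      then show ?thesis using True K(2)[of s] X0_eq[of s] by simp
    qed simp
  qed
  moreover have "indicator {0..t} s * X0 s = indicator {0..t} s * x s" for s
    using r_ge by (cases "s \<in> {0..t}") (simp_all add: X0_eq)
  ultimately show ?thesis by simp
qed

lemma LB_lin:
  assumes "0 \<le> t"
  shows "(LBINT s:{0..t}. e - cm * x s) = e * t - cm * (LBINT s:{0..t}. x s)"
proof -
  have "(LBINT s:{0..t}. e - cm * x s) = (\<integral>s. e * indicator {0..t} s - cm * (indicator {0..t} s * x s) \<partial>lborel)"
    unfolding set_lebesgue_integral_def
    by (intro Bochner_Integration.integral_cong) (simp_all add: algebra_simps)
  also have "\<dots> = (\<integral>s. e * indicator {0..t} s \<partial>lborel) - (\<integral>s. cm * (indicator {0..t} s * x s) \<partial>lborel)"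
    using int_x[OF assms] lborel_Icc_fin[of 0 t]
    by (intro Bochner_Integration.integral_diff) auto
  also have "\<dots> = e * t - cm * (LBINT s:{0..t}. x s)"
    using assms unfolding set_lebesgue_integral_def by simp
  finally show ?thesis .
qed

lemma main_eq:
  assumes "0 \<le> t"
  shows "x t = x 0 + e * t - cm * (LBINT s:{0..t}. x s)
     + (LBINT u:{-p..0}. fm u * (LBINT s:{u..t+u}. x s))
     + (LBINT u:{-q..0}. fn u * (LINT s:{u<..t+u}|N. lim_left x s))
     + cn * (LINT s:{0<..t}|N. lim_left x s)"
proof (cases "t = 0")
  case True
  have a: "(LBINT s:{0..0}. x s) = 0"
    unfolding set_lebesgue_integral_def using lborel_point_int[of 0 x] by simp
  have b: "(LBINT s:{u..0+u}. x s) = 0" for u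
    unfolding set_lebesgue_integral_def using lborel_point_int[of u x] by simp
  show ?thesis using True a b by (simp add: set_lebesgue_integral_def)
next
  case False
  then have t: "t > 0" using assms by simp
  have "x 0 = phi 0" using init r_ge by simp
  moreover have "theta e phi t = phi 0 + e * t" using t by (simp add: theta_def)
  ultimately show ?thesis using eq[OF t] unfolding cdgarch_eq_def by simp
qed

end

context cdg_path
begin

lemma X0_x_Icc:
  assumes "a \<ge> -r"
  shows "(LBINT s:{a..b}. X0 s) = (LBINT s:{a..b}. x s)"
  by (rule set_lebesgue_integral_cong) (use assms X0_eq in auto)

lemma I1_eq:
  assumes t: "0 \<le> t"
  shows "(LBINT u:{-p..0}. fm u * (LBINT s:{u..t+u}. x s)) = (LBINT s:{-p..t}. Fker fm p t s * x s)"
    and "integrable lborel (\<lambda>s. indicator {-p..t} s * (Fker fm p t s * x s))"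
proof -
  obtain Cm where Cm: "\<forall>u. \<bar>fm u\<bar> \<le> Cm" using fm_abs by blast
  obtain K where K: "0 \<le> K" "\<And>s. s \<in> {-r..t} \<Longrightarrow> \<bar>x s\<bar> \<le> K"
    "\<And>s. s \<in> {-r<..t} \<Longrightarrow> \<bar>lim_left x s\<bar> \<le> K" by (rule K_bnd[OF t]) blast
  have yb: "\<bar>X0 s\<bar> \<le> K" if "s \<in> {-p..t}" for s
    using that r_ge X0_eq[of s] K(2)[of s] by auto
  note fb = fub_mu[OF fm_meas, of Cm X0 p t K, OF _ X0_meas yb K(1)]
  have "(LBINT u:{-p..0}. fm u * (LBINT s:{u..t+u}. x s)) = (LBINT u:{-p..0}. fm u * (LBINT s:{u..t+u}. X0 s))"
    by (rule set_lebesgue_integral_cong) (use X0_x_Icc r_ge in auto)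
  also have "\<dots> = (LBINT s:{-p..t}. Fker fm p t s * X0 s)"
    by (rule fb(1)) (use Cm in auto)
  also have "\<dots> = (LBINT s:{-p..t}. Fker fm p t s * x s)"
    by (rule set_lebesgue_integral_cong) (use X0_eq r_ge in auto)
  finally show "(LBINT u:{-p..0}. fm u * (LBINT s:{u..t+u}. x s)) = (LBINT s:{-p..t}. Fker fm p t s * x s)" .
  have "integrable lborel (\<lambda>s. indicator {-p..t} s * (Fker fm p t s * X0 s))"
    by (rule fb(2)) (use Cm in auto)
  moreover have "indicator {-p..t} s * (Fker fm p t s * X0 s) = indicator {-p..t} s * (Fker fm p t s * x s)" for s
    using r_ge X0_eq[of s] by (cases "s \<in> {-p..t}") auto
  ultimately show "integrable lborel (\<lambda>s. indicator {-p..t} s * (Fker fm p t s * x s))" by simp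
qed

lemma J1_eq:
  assumes t: "0 \<le> t"
  shows "(LBINT u:{-q..0}. fn u * (LINT s:{u<..t+u}|N. lim_left x s)) = (LINT s:{-q<..t}|N. Fker fn q t s * lim_left x s)"
    and "integrable N (\<lambda>s. indicator {-q<..t} s * (Fker fn q t s * lim_left x s))"
proof -
  obtain Cn where Cn: "\<forall>u. \<bar>fn u\<bar> \<le> Cn" using fn_abs by blast
  obtain K where K: "0 \<le> K" "\<And>s. s \<in> {-r..t} \<Longrightarrow> \<bar>x s\<bar> \<le> K"
    "\<And>s. s \<in> {-r<..t} \<Longrightarrow> \<bar>lim_left x s\<bar> \<le> K" by (rule K_bnd[OF t]) blast
  have yb: "\<bar>XL s\<bar> \<le> K" if "s \<in> {-q<..t}" for s
    using that r_ge XL_eq[of s] K(3)[of s] by auto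
  note fb = fub_nu[OF N_sets N_fin fn_meas, of Cn XL q t K, OF _ XL_meas yb K(1)]
  have "(LBINT u:{-q..0}. fn u * (LINT s:{u<..t+u}|N. lim_left x s)) = (LBINT u:{-q..0}. fn u * (LINT s:{u<..t+u}|N. XL s))"
  proof (rule set_lebesgue_integral_cong)
    show "{-q..0} \<in> sets lborel" by simp
    show "\<forall>u. u \<in> {-q..0} \<longrightarrow> fn u * (LINT s:{u<..t+u}|N. lim_left x s) = fn u * (LINT s:{u<..t+u}|N. XL s)"
    proof (intro allI impI)
      fix u assume u: "u \<in> {-q..0}"
      have "(LINT s:{u<..t+u}|N. lim_left x s) = (LINT s:{u<..t+u}|N. XL s)"
      proof (rule set_lebesgue_integral_cong)
        show "{u<..t+u} \<in> sets N" unfolding N_sets by simp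
        show "\<forall>s. s \<in> {u<..t+u} \<longrightarrow> lim_left x s = XL s"
          using u r_ge XL_eq by auto
      qed
      then show "fn u * (LINT s:{u<..t+u}|N. lim_left x s) = fn u * (LINT s:{u<..t+u}|N. XL s)" by simp
    qed
  qed
  also have "\<dots> = (LINT s:{-q<..t}|N. Fker fn q t s * XL s)"
    by (rule fb(1)) (use Cn in auto)
  also have "\<dots> = (LINT s:{-q<..t}|N. Fker fn q t s * lim_left x s)"
  proof (rule set_lebesgue_integral_cong)
    show "{-q<..t} \<in> sets N" unfolding N_sets by simp
    show "\<forall>s. s \<in> {-q<..t} \<longrightarrow> Fker fn q t s * XL s = Fker fn q t s * lim_left x s"
      using r_ge XL_eq by auto
  qed
  finally show "(LBINT u:{-q..0}. fn u * (LINT s:{u<..t+u}|N. lim_left x s)) = (LINT s:{-q<..t}|N. Fker fn q t s * lim_left x s)" .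
  have "integrable N (\<lambda>s. indicator {-q<..t} s * (Fker fn q t s * XL s))"
    by (rule fb(2)) (use Cn in auto)
  moreover have "indicator {-q<..t} s * (Fker fn q t s * XL s) = indicator {-q<..t} s * (Fker fn q t s * lim_left x s)" for s
    using r_ge XL_eq[of s] by (cases "s \<in> {-q<..t}") auto
  ultimately show "integrable N (\<lambda>s. indicator {-q<..t} s * (Fker fn q t s * lim_left x s))" by simp
qed

lemma A_facts:
  assumes t: "0 \<le> t"
  shows "(LBINT v:{0..t}. (LBINT u:{-p..0}. fm u * x (v + u))) = (LBINT u:{-p..0}. fm u * (LBINT s:{u..t+u}. x s))"
    and "integrable lborel (\<lambda>v. indicator {0..t} v * (LBINT u:{-p..0}. fm u * x (v + u)))"
proof -
  obtain Cm where Cm: "\<forall>u. \<bar>fm u\<bar> \<le> Cm" using fm_abs by blast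
  obtain K where K: "0 \<le> K" "\<And>s. s \<in> {-r..t} \<Longrightarrow> \<bar>x s\<bar> \<le> K"
    "\<And>s. s \<in> {-r<..t} \<Longrightarrow> \<bar>lim_left x s\<bar> \<le> K" by (rule K_bnd[OF t]) blast
  have yb: "\<bar>X0 s\<bar> \<le> K" if "s \<in> {-p..t}" for s
    using that r_ge X0_eq[of s] K(2)[of s] by auto
  note fb = fub_A[OF fm_meas, of Cm X0 p t K, OF _ X0_meas yb K(1)]
  have inner: "(LBINT u:{-p..0}. fm u * x (v + u)) = (LBINT u:{-p..0}. fm u * X0 (v + u))" if "v \<in> {0..t}" for v
    by (rule set_lebesgue_integral_cong) (use that r_ge X0_eq in auto)
  have "(LBINT v:{0..t}. (LBINT u:{-p..0}. fm u * x (v + u))) = (LBINT v:{0..t}. (LBINT u:{-p..0}. fm u * X0 (v + u)))"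
    by (rule set_lebesgue_integral_cong) (use inner in auto)
  also have "\<dots> = (LBINT u:{-p..0}. fm u * (LBINT s:{u..t+u}. X0 s))"
    by (rule fb(1)) (use Cm in auto)
  also have "\<dots> = (LBINT u:{-p..0}. fm u * (LBINT s:{u..t+u}. x s))"
    by (rule set_lebesgue_integral_cong) (use X0_x_Icc r_ge in auto)
  finally show "(LBINT v:{0..t}. (LBINT u:{-p..0}. fm u * x (v + u))) = (LBINT u:{-p..0}. fm u * (LBINT s:{u..t+u}. x s))" .
  have "integrable lborel (\<lambda>v. indicator {0..t} v * (LBINT u:{-p..0}. fm u * X0 (v + u)))"
    by (rule fb(2)) (use Cm in auto)
  moreover have "indicator {0..t} v * (LBINT u:{-p..0}. fm u * X0 (v + u)) = indicator {0..t} v * (LBINT u:{-p..0}. fm u * x (v + u))" for v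
    using inner[of v] by (cases "v \<in> {0..t}") auto
  ultimately show "integrable lborel (\<lambda>v. indicator {0..t} v * (LBINT u:{-p..0}. fm u * x (v + u)))" by simp
qed

lemma B_facts:
  assumes t: "0 \<le> t"
  shows "(LBINT v:{0..t}. (LINT w:{v-q<..v}|N. fn (w - v) * lim_left x w)) = (LINT s:{-q<..t}|N. Fker fn q t s * lim_left x s)"
    and "integrable lborel (\<lambda>v. indicator {0..t} v * (LINT w:{v-q<..v}|N. fn (w - v) * lim_left x w))"
proof -
  obtain Cn where Cn: "\<forall>u. \<bar>fn u\<bar> \<le> Cn" using fn_abs by blast
  obtain K where K: "0 \<le> K" "\<And>s. s \<in> {-r..t} \<Longrightarrow> \<bar>x s\<bar> \<le> K"
    "\<And>s. s \<in> {-r<..t} \<Longrightarrow> \<bar>lim_left x s\<bar> \<le> K" by (rule K_bnd[OF t]) blast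
  have yb: "\<bar>XL s\<bar> \<le> K" if "s \<in> {-q<..t}" for s
    using that r_ge XL_eq[of s] K(3)[of s] by auto
  note fb = fub_B[OF N_sets N_fin fn_meas, of Cn XL q t K, OF _ XL_meas yb K(1) pq(2)]
  have inner: "(LINT w:{v-q<..v}|N. fn (w - v) * lim_left x w) = (LINT w:{v-q<..v}|N. fn (w - v) * XL w)" if "v \<in> {0..t}" for v
  proof (rule set_lebesgue_integral_cong)
    show "{v-q<..v} \<in> sets N" unfolding N_sets by simp
    show "\<forall>w. w \<in> {v-q<..v} \<longrightarrow> fn (w - v) * lim_left x w = fn (w - v) * XL w"
      using that r_ge XL_eq by auto
  qed
  have "(LBINT v:{0..t}. (LINT w:{v-q<..v}|N. fn (w - v) * lim_left x w)) = (LBINT v:{0..t}. (LINT w:{v-q<..v}|N. fn (w - v) * XL w))"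
    by (rule set_lebesgue_integral_cong) (use inner in auto)
  also have "\<dots> = (LINT s:{-q<..t}|N. Fker fn q t s * XL s)"
    by (rule fb(1)) (use Cn in auto)
  also have "\<dots> = (LINT s:{-q<..t}|N. Fker fn q t s * lim_left x s)"
  proof (rule set_lebesgue_integral_cong)
    show "{-q<..t} \<in> sets N" unfolding N_sets by simp
    show "\<forall>s. s \<in> {-q<..t} \<longrightarrow> Fker fn q t s * XL s = Fker fn q t s * lim_left x s"
      using r_ge XL_eq by auto
  qed
  finally show "(LBINT v:{0..t}. (LINT w:{v-q<..v}|N. fn (w - v) * lim_left x w)) = (LINT s:{-q<..t}|N. Fker fn q t s * lim_left x s)" .
  have "integrable lborel (\<lambda>v. indicator {0..t} v * (LINT w:{v-q<..v}|N. fn (w - v) * XL w))"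
    by (rule fb(2)) (use Cn in auto)
  moreover have "indicator {0..t} v * (LINT w:{v-q<..v}|N. fn (w - v) * XL w) = indicator {0..t} v * (LINT w:{v-q<..v}|N. fn (w - v) * lim_left x w)" for v
    using inner[of v] by (cases "v \<in> {0..t}") auto
  ultimately show "integrable lborel (\<lambda>v. indicator {0..t} v * (LINT w:{v-q<..v}|N. fn (w - v) * lim_left x w))" by simp
qed

lemma volterra:
  assumes t: "0 \<le> t"
  shows "x t = x 0 + (LBINT s:{0..t}. e - cm * x s)
               + cn * (LINT s:{0<..t}|N. lim_left x s)
               + ((LBINT s:{-p..t}. Fker fm p t s * x s)
                  + (LINT s:{-q<..t}|N. Fker fn q t s * lim_left x s))"
  using main_eq[OF t] LB_lin[OF t] I1_eq(1)[OF t] J1_eq(1)[OF t] by simp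

lemma sfde:
  assumes t: "0 \<le> t"
  shows "x t = x 0 + (LBINT s:{0..t}. e - cm * x s + ((LBINT u:{-p..0}. fm u * x (s + u))
                      + (LINT w:{s-q<..s}|N. fn (w - s) * lim_left x w)))
               + cn * (LINT s:{0<..t}|N. lim_left x s)"
proof -
  let ?A = "\<lambda>v. (LBINT u:{-p..0}. fm u * x (v + u))"
  let ?B = "\<lambda>v. (LINT w:{v-q<..v}|N. fn (w - v) * lim_left x w)"
  have i1: "integrable lborel (\<lambda>s. indicator {0..t} s * (e - cm * x s))"
  proof -
    have "integrable lborel (\<lambda>s. e * indicator {0..t} s - cm * (indicator {0..t} s * x s))"
      using int_x[OF t] lborel_Icc_fin[of 0 t] by auto
    then show ?thesis by (simp add: algebra_simps)
  qed
  have "(LBINT s:{0..t}. e - cm * x s + (?A s + ?B s))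
      = (\<integral>s. indicator {0..t} s * (e - cm * x s) + (indicator {0..t} s * ?A s + indicator {0..t} s * ?B s) \<partial>lborel)"
    unfolding set_lebesgue_integral_def by (intro Bochner_Integration.integral_cong) (simp_all add: algebra_simps)
  also have "\<dots> = (\<integral>s. indicator {0..t} s * (e - cm * x s) \<partial>lborel) + ((\<integral>s. indicator {0..t} s * ?A s \<partial>lborel) + (\<integral>s. indicator {0..t} s * ?B s \<partial>lborel))"
    using i1 A_facts(2)[OF t] B_facts(2)[OF t] by simp
  also have "\<dots> = (LBINT s:{0..t}. e - cm * x s) + ((LBINT s:{0..t}. ?A s) + (LBINT s:{0..t}. ?B s))"
    unfolding set_lebesgue_integral_def by simp
  finally have eq1: "(LBINT s:{0..t}. e - cm * x s + (?A s + ?B s)) = (LBINT s:{0..t}. e - cm * x s) + ((LBINT s:{0..t}. ?A s) + (LBINT s:{0..t}. ?B s))" .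
  show ?thesis
    using eq1 main_eq[OF t] LB_lin[OF t] A_facts(1)[OF t] B_facts(1)[OF t] J1_eq(1)[OF t] by simp
qed

end

lemma abs5: "\<bar>a + b + c + d + e\<bar> \<le> \<bar>a\<bar> + \<bar>b\<bar> + \<bar>c\<bar> + \<bar>d\<bar> + \<bar>(e::real)\<bar>"
proof -
  have "\<bar>a + b + c + d + e\<bar> \<le> \<bar>a + b + c + d\<bar> + \<bar>e\<bar>" by (rule abs_triangle_ineq)
  also have "\<bar>a + b + c + d\<bar> \<le> \<bar>a + b + c\<bar> + \<bar>d\<bar>" by (rule abs_triangle_ineq)
  also have "\<bar>a + b + c\<bar> \<le> \<bar>a + b\<bar> + \<bar>c\<bar>" by (rule abs_triangle_ineq)
  also have "\<bar>a + b\<bar> \<le> \<bar>a\<bar> + \<bar>b\<bar>" by (rule abs_triangle_ineq)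
  finally show ?thesis by simp
qed

context cdg_path
begin

lemma bv:
  assumes T: "0 \<le> T"
  shows "bounded_variation_on x 0 T"
proof -
  obtain K where K: "0 \<le> K" "\<And>s. s \<in> {-r..T} \<Longrightarrow> \<bar>x s\<bar> \<le> K"
    "\<And>s. s \<in> {-r<..T} \<Longrightarrow> \<bar>lim_left x s\<bar> \<le> K" by (rule K_bnd[OF T]) blast
  obtain Cm where Cm: "\<forall>u. \<bar>fm u\<bar> \<le> Cm" using fm_abs by blast
  obtain Cn where Cn: "\<forall>u. \<bar>fn u\<bar> \<le> Cn" using fn_abs by blast
  define k0 where "k0 \<tau> \<sigma> = (indicator {0..\<tau>} \<sigma> :: real)" for \<tau> \<sigma> :: real
  define k1 where "k1 \<tau> \<sigma> = indicator {-p..\<tau>} \<sigma> * Fker fm p \<tau> \<sigma>" for \<tau> \<sigma> :: real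
  define k2 where "k2 \<tau> \<sigma> = indicator {-q<..\<tau>} \<sigma> * Fker fn q \<tau> \<sigma>" for \<tau> \<sigma> :: real
  define k3 where "k3 \<tau> \<sigma> = (indicator {0<..\<tau>} \<sigma> :: real)" for \<tau> \<sigma> :: real
  define H where "H \<tau> = \<bar>e\<bar> * \<tau> + cm * (K * (\<integral>\<sigma>. k0 \<tau> \<sigma> \<partial>lborel)) + K * (\<integral>\<sigma>. k1 \<tau> \<sigma> \<partial>lborel)
      + K * (\<integral>\<sigma>. k2 \<tau> \<sigma> \<partial>N) + cn * (K * (\<integral>\<sigma>. k3 \<tau> \<sigma> \<partial>N))" for \<tau>
  define f0 where "f0 \<tau> = (\<integral>\<sigma>. k0 \<tau> \<sigma> * x \<sigma> \<partial>lborel)" for \<tau>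
  define V1 where "V1 \<tau> = (\<integral>\<sigma>. k1 \<tau> \<sigma> * x \<sigma> \<partial>lborel)" for \<tau>
  define V2 where "V2 \<tau> = (\<integral>\<sigma>. k2 \<tau> \<sigma> * lim_left x \<sigma> \<partial>N)" for \<tau>
  define J0 where "J0 \<tau> = (\<integral>\<sigma>. k3 \<tau> \<sigma> * lim_left x \<sigma> \<partial>N)" for \<tau>
  have xeq: "x \<tau> = x 0 + e * \<tau> - cm * f0 \<tau> + V1 \<tau> + V2 \<tau> + cn * J0 \<tau>" if "0 \<le> \<tau>" for \<tau>
  proof -
    have a: "f0 \<tau> = (LBINT s:{0..\<tau>}. x s)" unfolding f0_def k0_def set_lebesgue_integral_def by simp
    have b: "V1 \<tau> = (LBINT s:{-p..\<tau>}. Fker fm p \<tau> s * x s)"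
      unfolding V1_def k1_def set_lebesgue_integral_def by (simp add: mult.assoc)
    have c: "V2 \<tau> = (LINT s:{-q<..\<tau>}|N. Fker fn q \<tau> s * lim_left x s)"
      unfolding V2_def k2_def set_lebesgue_integral_def by (simp add: mult.assoc)
    have d: "J0 \<tau> = (LINT s:{0<..\<tau>}|N. lim_left x s)"
      unfolding J0_def k3_def set_lebesgue_integral_def by simp
    show ?thesis using main_eq[OF that] I1_eq(1)[OF that] J1_eq(1)[OF that] a b c d by simp
  qed
  have dom: "\<bar>x t - x s\<bar> \<le> H t - H s" if st: "0 \<le> s" "s \<le> t" "t \<le> T" for s t
  proof -
    have s0: "0 \<le> s" and t0: "0 \<le> t" using st by auto
    have d0: "\<bar>f0 t - f0 s\<bar> \<le> K * (\<integral>\<sigma>. k0 t \<sigma> \<partial>lborel) - K * (\<integral>\<sigma>. k0 s \<sigma> \<partial>lborel)"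
      unfolding f0_def
    proof (rule kernel_dom)
      show "integrable lborel (\<lambda>\<sigma>. k0 s \<sigma> * x \<sigma>)" unfolding k0_def by (rule int_x[OF s0])
      show "integrable lborel (\<lambda>\<sigma>. k0 t \<sigma> * x \<sigma>)" unfolding k0_def by (rule int_x[OF t0])
      show "integrable lborel (k0 s)" unfolding k0_def[abs_def] using lborel_Icc_fin by simp
      show "integrable lborel (k0 t)" unfolding k0_def[abs_def] using lborel_Icc_fin by simp
      show "0 \<le> k0 s \<sigma>" for \<sigma> unfolding k0_def by simp
      show "k0 s \<sigma> \<le> k0 t \<sigma>" for \<sigma> unfolding k0_def using st by (simp add: indicator_def)
      show "\<bar>x \<sigma>\<bar> \<le> K" if "k0 t \<sigma> \<noteq> 0" for \<sigma>
      proof -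
        have "\<sigma> \<in> {0..t}" using that unfolding k0_def by (simp add: indicator_def split: if_splits)
        then show ?thesis using K(2)[of \<sigma>] r_ge st by auto
      qed
    qed
    have i1m: "integrable lborel (k1 \<tau>)" if "0 \<le> \<tau>" for \<tau>
    proof -
      have "integrable lborel (\<lambda>\<sigma>. indicator {-p..\<tau>} \<sigma> * (Fker fm p \<tau> \<sigma> * (\<lambda>_. 1) \<sigma>))"
        by (rule fub_mu(2)[OF fm_meas, of Cm "\<lambda>_. 1" p \<tau> 1]) (use Cm in auto)
      then show ?thesis unfolding k1_def[abs_def] by simp
    qed
    have d1: "\<bar>V1 t - V1 s\<bar> \<le> K * (\<integral>\<sigma>. k1 t \<sigma> \<partial>lborel) - K * (\<integral>\<sigma>. k1 s \<sigma> \<partial>lborel)"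
      unfolding V1_def
    proof (rule kernel_dom)
      show "integrable lborel (\<lambda>\<sigma>. k1 s \<sigma> * x \<sigma>)" unfolding k1_def using I1_eq(2)[OF s0] by (simp add: mult.assoc)
      show "integrable lborel (\<lambda>\<sigma>. k1 t \<sigma> * x \<sigma>)" unfolding k1_def using I1_eq(2)[OF t0] by (simp add: mult.assoc)
      show "integrable lborel (k1 s)" by (rule i1m[OF s0])
      show "integrable lborel (k1 t)" by (rule i1m[OF t0])
      show "0 \<le> k1 s \<sigma>" for \<sigma> unfolding k1_def using Fker_nonneg[of fm, OF fm_pos] by simp
      show "k1 s \<sigma> \<le> k1 t \<sigma>" for \<sigma> unfolding k1_def
      proof (rule mult_mono)
        show "indicator {-p..s} \<sigma> \<le> (indicator {-p..t} \<sigma> :: real)" using st by (simp add: indicator_def)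
        show "Fker fm p s \<sigma> \<le> Fker fm p t \<sigma>" by (rule Fker_mono[OF fm_meas _ fm_pos]) (use Cm st in auto)
      qed (simp_all add: Fker_nonneg fm_pos)
      show "\<bar>x \<sigma>\<bar> \<le> K" if "k1 t \<sigma> \<noteq> 0" for \<sigma>
      proof -
        have "\<sigma> \<in> {-p..t}" using that unfolding k1_def by (simp add: indicator_def split: if_splits)
        then show ?thesis using K(2)[of \<sigma>] r_ge st by auto
      qed
    qed
    have i2m: "integrable N (k2 \<tau>)" if "0 \<le> \<tau>" for \<tau>
    proof -
      have "integrable N (\<lambda>\<sigma>. indicator {-q<..\<tau>} \<sigma> * (Fker fn q \<tau> \<sigma> * (\<lambda>_. 1) \<sigma>))"
        by (rule fub_nu(2)[OF N_sets N_fin fn_meas, of Cn "\<lambda>_. 1" q \<tau> 1]) (use Cn in auto)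
      then show ?thesis unfolding k2_def[abs_def] by simp
    qed
    have d2: "\<bar>V2 t - V2 s\<bar> \<le> K * (\<integral>\<sigma>. k2 t \<sigma> \<partial>N) - K * (\<integral>\<sigma>. k2 s \<sigma> \<partial>N)"
      unfolding V2_def
    proof (rule kernel_dom)
      show "integrable N (\<lambda>\<sigma>. k2 s \<sigma> * lim_left x \<sigma>)" unfolding k2_def using J1_eq(2)[OF s0] by (simp add: mult.assoc)
      show "integrable N (\<lambda>\<sigma>. k2 t \<sigma> * lim_left x \<sigma>)" unfolding k2_def using J1_eq(2)[OF t0] by (simp add: mult.assoc)
      show "integrable N (k2 s)" by (rule i2m[OF s0])
      show "integrable N (k2 t)" by (rule i2m[OF t0])
      show "0 \<le> k2 s \<sigma>" for \<sigma> unfolding k2_def using Fker_nonneg[of fn, OF fn_pos] by simp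
      show "k2 s \<sigma> \<le> k2 t \<sigma>" for \<sigma> unfolding k2_def
      proof (rule mult_mono)
        show "indicator {-q<..s} \<sigma> \<le> (indicator {-q<..t} \<sigma> :: real)" using st by (simp add: indicator_def)
        show "Fker fn q s \<sigma> \<le> Fker fn q t \<sigma>" by (rule Fker_mono[OF fn_meas _ fn_pos]) (use Cn st in auto)
      qed (simp_all add: Fker_nonneg fn_pos)
      show "\<bar>lim_left x \<sigma>\<bar> \<le> K" if "k2 t \<sigma> \<noteq> 0" for \<sigma>
      proof -
        have "\<sigma> \<in> {-q<..t}" using that unfolding k2_def by (simp add: indicator_def split: if_splits)
        then show ?thesis using K(3)[of \<sigma>] r_ge st by auto
      qed
    qed
    have i3: "integrable N (\<lambda>\<sigma>. k3 \<tau> \<sigma> * lim_left x \<sigma>)" if "0 \<le> \<tau>" "\<tau> \<le> T" for \<tau>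
    proof -
      have "integrable N (\<lambda>\<sigma>. indicator {0<..\<tau>} \<sigma> * XL \<sigma>)"
      proof (rule integrable_bsupp[where C=K and S="{0<..\<tau>}"])
        show "sets N = sets borel" by (rule N_sets)
        show "(\<lambda>\<sigma>. indicator {0<..\<tau>} \<sigma> * XL \<sigma>) \<in> borel_measurable borel"
          by (intro borel_measurable_times borel_measurable_indicator XL_meas) simp
        show "{0<..\<tau>} \<in> sets borel" by simp
        show "emeasure N {0<..\<tau>} < \<infinity>" by (rule N_fin)
        fix \<sigma> show "\<bar>indicator {0<..\<tau>} \<sigma> * XL \<sigma>\<bar> \<le> K * indicator {0<..\<tau>} \<sigma>"
        proof (cases "\<sigma> \<in> {0<..\<tau>}")
          case True
          then have "\<sigma> \<in> {-r<..T}" "\<sigma> > -r" using r_ge that by auto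
          then show ?thesis using True K(3)[of \<sigma>] XL_eq[of \<sigma>] by simp
        qed (simp add: K(1))
      qed
      moreover have "indicator {0<..\<tau>} \<sigma> * XL \<sigma> = k3 \<tau> \<sigma> * lim_left x \<sigma>" for \<sigma>
        unfolding k3_def using r_ge XL_eq[of \<sigma>] by (cases "\<sigma> \<in> {0<..\<tau>}") auto
      ultimately show ?thesis by simp
    qed
    have i3m: "integrable N (k3 \<tau>)" for \<tau>
    proof -
      have "{0<..\<tau>} \<in> sets N" unfolding N_sets by simp
      then show ?thesis unfolding k3_def[abs_def] using N_fin by simp
    qed
    have d3: "\<bar>J0 t - J0 s\<bar> \<le> K * (\<integral>\<sigma>. k3 t \<sigma> \<partial>N) - K * (\<integral>\<sigma>. k3 s \<sigma> \<partial>N)"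
      unfolding J0_def
    proof (rule kernel_dom)
      show "integrable N (\<lambda>\<sigma>. k3 s \<sigma> * lim_left x \<sigma>)" by (rule i3) (use st in auto)
      show "integrable N (\<lambda>\<sigma>. k3 t \<sigma> * lim_left x \<sigma>)" by (rule i3) (use st in auto)
      show "integrable N (k3 s)" by (rule i3m)
      show "integrable N (k3 t)" by (rule i3m)
      show "0 \<le> k3 s \<sigma>" for \<sigma> unfolding k3_def by simp
      show "k3 s \<sigma> \<le> k3 t \<sigma>" for \<sigma> unfolding k3_def using st by (simp add: indicator_def)
      show "\<bar>lim_left x \<sigma>\<bar> \<le> K" if "k3 t \<sigma> \<noteq> 0" for \<sigma>
      proof -
        have "\<sigma> \<in> {0<..t}" using that unfolding k3_def by (simp add: indicator_def split: if_splits)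
        then show ?thesis using K(3)[of \<sigma>] r_ge st by auto
      qed
    qed
    have "x t - x s = e * (t - s) + (- cm) * (f0 t - f0 s) + (V1 t - V1 s) + (V2 t - V2 s) + cn * (J0 t - J0 s)"
      using xeq[OF s0] xeq[OF t0] by (simp add: algebra_simps)
    then have "\<bar>x t - x s\<bar> \<le> \<bar>e * (t - s)\<bar> + \<bar>(- cm) * (f0 t - f0 s)\<bar> + \<bar>V1 t - V1 s\<bar> + \<bar>V2 t - V2 s\<bar> + \<bar>cn * (J0 t - J0 s)\<bar>"
      using abs5 by metis
    also have "\<bar>e * (t - s)\<bar> = \<bar>e\<bar> * t - \<bar>e\<bar> * s"
    proof -
      have "\<bar>t - s\<bar> = t - s" using st by simp
      then show ?thesis unfolding abs_mult by (simp add: right_diff_distrib)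
    qed
    also have "\<bar>(- cm) * (f0 t - f0 s)\<bar> \<le> cm * (K * (\<integral>\<sigma>. k0 t \<sigma> \<partial>lborel) - K * (\<integral>\<sigma>. k0 s \<sigma> \<partial>lborel))"
      unfolding abs_mult using cm d0 by (simp add: mult_left_mono)
    also have "\<bar>cn * (J0 t - J0 s)\<bar> \<le> cn * (K * (\<integral>\<sigma>. k3 t \<sigma> \<partial>N) - K * (\<integral>\<sigma>. k3 s \<sigma> \<partial>N))"
      unfolding abs_mult using cn d3 by (simp add: mult_left_mono)
    finally show ?thesis using d1 d2 unfolding H_def by (simp add: algebra_simps)
  qed
  show ?thesis by (rule bv_dom[OF T dom])
qed

end

lemma interval_measure_Ioc_finite:
  "emeasure (interval_measure F) {a<..b} < \<infinity>"
proof -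
  let ?I = "{(a, b). a \<le> (b::real)}" and ?G = "\<lambda>(a, b). {a<..b::real}"
    and ?mu = "\<lambda>(a, b). ennreal (F b - F a)"
  define P where "P \<mu>' \<longleftrightarrow> (\<forall>i\<in>?I. \<mu>' (?G i) = ?mu i) \<and> measure_space UNIV (sigma_sets UNIV (?G`?I)) \<mu>'" for \<mu>'
  show ?thesis
  proof (cases "a \<le> b")
    case False then show ?thesis by simp
  next
    case ab: True
    show ?thesis
    proof (cases "(\<exists>\<mu>'. P \<mu>') \<and> \<not> (\<forall>i\<in>?I. ?mu i = 0)")
      case True
      then have eq: "interval_measure F = measure_of UNIV (?G`?I) (Eps P)"
        unfolding interval_measure_def extend_measure_def P_def by simp
      have P: "P (Eps P)" using True by (metis someI_ex)
      have "Eps P {a<..b} = ennreal (F b - F a)" using P ab unfolding P_def by auto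
      then show ?thesis unfolding eq emeasure_measure_of_conv by auto
    next
      case False
      have eq: "interval_measure F = measure_of UNIV (?G`?I) (\<lambda>_. 0)"
        unfolding interval_measure_def extend_measure_def
        by (rule if_not_P) (use False in \<open>simp add: P_def\<close>)
      show ?thesis unfolding eq emeasure_measure_of_conv by auto
    qed
  qed
qed



lemma cadlag_from_mono:
  assumes "a \<le> b" "cadlag_from a f"
  shows "cadlag_from b f"
  using assms unfolding cadlag_from_def by auto

lemma semimart:
  fixes M :: "'a measure" and F :: "real \<Rightarrow> 'a measure" and X :: "real \<Rightarrow> 'a \<Rightarrow> real"
  assumes filt: "filtration_usual M (-r) F" and ad: "adapted F (-r) X"
    and cad: "\<forall>\<omega>\<in>space M. cadlag_from (-r) (\<lambda>t. X t \<omega>)" and r: "0 \<le> r"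
    and bv: "AE \<omega> in M. \<forall>T\<ge>0. bounded_variation_on (\<lambda>t. X t \<omega>) 0 T"
  shows "semimartingale_from M F 0 X"
proof -
  note fu = filt[unfolded filtration_usual_def]
  note f1 = conjunct1[OF fu] and f2 = conjunct1[OF conjunct2[OF fu]]
  have sub: "subalgebra M (F t)" if "t \<ge> -r" for t using f1[rule_format, OF that] .
  have mono: "sets (F s) \<subseteq> sets (F t)" if "-r \<le> s" "s \<le> t" for s t
    using f2[rule_format, OF that] .
  have adX: "X t \<in> borel_measurable (F t)" if "t \<ge> -r" for t
    using ad[unfolded adapted_def, rule_format, OF that] .
  have ad0: "adapted F 0 X" unfolding adapted_def using adX r by auto
  have cad0: "\<forall>\<omega>\<in>space M. cadlag_from 0 (\<lambda>t. X t \<omega>)"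
    using cad r cadlag_from_mono[of "-r" 0] by auto
  define Mt where "Mt = (\<lambda>(t::real) (\<omega>::'a). 0::real)"
  define A where "A = (\<lambda>t \<omega>. X t \<omega> - X 0 \<omega>)"
  have lm: "local_martingale_from M F 0 Mt"
    unfolding local_martingale_from_def
  proof (intro conjI exI[of _ "\<lambda>n \<omega>. \<infinity>"])
    show "adapted F 0 Mt" unfolding adapted_def Mt_def by simp
    show "\<forall>\<omega>\<in>space M. cadlag_from 0 (\<lambda>t. Mt t \<omega>)"
      unfolding cadlag_from_def Mt_def by auto
    show "\<forall>n. stopping_time_from F 0 (space M) (\<lambda>\<omega>. \<infinity>)"
      unfolding stopping_time_from_def by simp
    show "\<forall>n. \<forall>\<omega>\<in>space M. (\<infinity>::ereal) \<le> \<infinity>" by simp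
    show "AE \<omega> in M. (\<lambda>n. \<infinity>::ereal) \<longlonglongrightarrow> \<infinity>" by simp
    show "\<forall>n. martingale_from M F 0 (\<lambda>t \<omega>. Mt (real_of_ereal (min (ereal t) \<infinity>)) \<omega>)"
      unfolding martingale_from_def adapted_def Mt_def by simp
  qed
  have fv: "fv_process M F 0 A"
    unfolding fv_process_def
  proof (intro conjI)
    show "adapted F 0 A" unfolding adapted_def A_def
    proof (intro allI impI)
      fix t :: real assume t: "0 \<le> t"
      have r0': "-r \<le> 0" and rt: "-r \<le> t" using r t by auto
      have sp0: "space (F 0) = space M" using sub[OF r0'] unfolding subalgebra_def by blast
      have spt: "space (F t) = space M" using sub[OF rt] unfolding subalgebra_def by blast
      have ss: "sets (F 0) \<subseteq> sets (F t)" using mono[OF r0' t] .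
      have sa: "subalgebra (F t) (F 0)"
        unfolding subalgebra_def using sp0 spt ss by simp
      have m0: "X 0 \<in> borel_measurable (F t)"
        by (rule measurable_from_subalg[OF sa adX[OF r0']])
      have mt: "X t \<in> borel_measurable (F t)" by (rule adX[OF rt])
      show "(\<lambda>\<omega>. X t \<omega> - X 0 \<omega>) \<in> borel_measurable (F t)"
        by (rule borel_measurable_diff[OF mt m0])
    qed
    show "\<forall>\<omega>\<in>space M. cadlag_from 0 (\<lambda>t. A t \<omega>)"
    proof
      fix \<omega> assume "\<omega> \<in> space M"
      then have c: "cadlag_from 0 (\<lambda>t. X t \<omega>)" using cad0 by blast
      show "cadlag_from 0 (\<lambda>t. A t \<omega>)"
        unfolding cadlag_from_def A_def
      proof (intro conjI allI impI)
        fix t :: real assume "0 \<le> t"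
        then have "continuous (at_right t) (\<lambda>t. X t \<omega>)" using c unfolding cadlag_from_def by blast
        then show "continuous (at_right t) (\<lambda>t. X t \<omega> - X 0 \<omega>)" by (intro continuous_diff) auto
      next
        fix t :: real assume "0 < t"
        then obtain l where "((\<lambda>t. X t \<omega>) \<longlongrightarrow> l) (at_left t)" using c unfolding cadlag_from_def by blast
        then have "((\<lambda>t. X t \<omega> - X 0 \<omega>) \<longlongrightarrow> l - X 0 \<omega>) (at_left t)" by (intro tendsto_diff) auto
        then show "\<exists>l. ((\<lambda>t. X t \<omega> - X 0 \<omega>) \<longlongrightarrow> l) (at_left t)" by blast
      qed
    qed
    show "AE \<omega> in M. \<forall>T\<ge>0. bounded_variation_on (\<lambda>t. A t \<omega>) 0 T"
      using bv by eventually_elim (simp add: A_def bounded_variation_on_def)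
  qed
  have E: "local_martingale_from M F 0 Mt \<and> (\<forall>\<omega>\<in>space M. Mt 0 \<omega> = 0) \<and> fv_process M F 0 A
      \<and> (\<forall>\<omega>\<in>space M. A 0 \<omega> = 0) \<and> (AE \<omega> in M. \<forall>t\<ge>0. X t \<omega> = X 0 \<omega> + Mt t \<omega> + A t \<omega>)"
  proof (intro conjI)
    show "local_martingale_from M F 0 Mt" by (rule lm)
    show "\<forall>\<omega>\<in>space M. Mt 0 \<omega> = 0" unfolding Mt_def by simp
    show "fv_process M F 0 A" by (rule fv)
    show "\<forall>\<omega>\<in>space M. A 0 \<omega> = 0" unfolding A_def by simp
    show "AE \<omega> in M. \<forall>t\<ge>0. X t \<omega> = X 0 \<omega> + Mt t \<omega> + A t \<omega>" unfolding Mt_def A_def by simp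
  qed
  show ?thesis
    unfolding semimartingale_from_def using ad0 cad0 E by blast
qed

theorem theorem4p7:
  fixes M :: "'a measure" and F :: "real \<Rightarrow> 'a measure"
    and L \<Phi> X :: "real \<Rightarrow> 'a \<Rightarrow> real"
    and p q r \<eta> c\<^sub>\<mu> c\<^sub>\<nu> \<sigma>\<^sub>L :: real and \<nu>\<^sub>L :: "real measure"
    and f\<^sub>\<mu> f\<^sub>\<nu> :: "real \<Rightarrow> real"
  assumes P: "prob_space M"
    and pq: "p \<ge> 0" "q \<ge> 0" and r_def: "r = max p q" and r_pos: "r > 0"
    and filt: "filtration_usual M (-r) F"
    and levy: "levy_process M F (-r) L"
    and cent: "centered_square_integrable M (-r) L"
    and triplet: "levy_khintchine M (-r) L \<sigma>\<^sub>L \<nu>\<^sub>L"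
    and fourth: "integrable M (\<lambda>\<omega>. (L (-r + 1) \<omega>) ^ 4)"
    and eta: "\<eta> > 0" and cmu: "c\<^sub>\<mu> > 0" and cnu: "c\<^sub>\<nu> > 0"
    and fmu: "continuous_on {-p..0} f\<^sub>\<mu>" "\<forall>u. f\<^sub>\<mu> u \<ge> 0" "\<forall>u. u \<notin> {-p..0} \<longrightarrow> f\<^sub>\<mu> u = 0"
    and fnu: "continuous_on {-q..0} f\<^sub>\<nu>" "\<forall>u. f\<^sub>\<nu> u \<ge> 0" "\<forall>u. u \<notin> {-q..0} \<longrightarrow> f\<^sub>\<nu> u = 0"
    and Phi_cadlag: "\<forall>\<omega>\<in>space M. cadlag_on (-r) 0 (\<lambda>t. \<Phi> t \<omega>)"
    and Phi_adapted: "\<forall>t\<in>{-r..0}. \<Phi> t \<in> borel_measurable (natural_filtration M (-r) L t)"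
    and Phi_L2: "(\<integral>\<^sup>+\<omega>. (SUP s\<in>{-r..0}. ennreal ((\<Phi> s \<omega>)\<^sup>2)) \<partial>M) < \<infinity>"
    and sol: "strong_solution M F r p q \<eta> c\<^sub>\<mu> c\<^sub>\<nu> f\<^sub>\<mu> f\<^sub>\<nu> \<sigma>\<^sub>L L \<Phi> X"
  shows
    \<comment> \<open>stochastic Volterra integral equation\<close>
    "(AE \<omega> in M. \<forall>t\<ge>0.
        (let x = (\<lambda>s. X s \<omega>); SM = dS \<sigma>\<^sub>L (-r) (\<lambda>s. L s \<omega>) in
         x t = x 0 + (LBINT s:{0..t}. \<eta> - c\<^sub>\<mu> * x s)
               + c\<^sub>\<nu> * (LINT s:{0<..t}|SM. lim_left x s)
               + ((LBINT s:{-p..t}. Fker f\<^sub>\<mu> p t s * x s)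
                  + (LINT s:{-q<..t}|SM. Fker f\<^sub>\<nu> q t s * lim_left x s))))
     \<and>
     \<comment> \<open>stochastic functional differential equation, in integral form\<close>
     (AE \<omega> in M. \<forall>t\<ge>0.
        (let x = (\<lambda>s. X s \<omega>); SM = dS \<sigma>\<^sub>L (-r) (\<lambda>s. L s \<omega>);
             \<xi> = (\<lambda>v. (LBINT u:{-p..0}. f\<^sub>\<mu> u * x (v + u))
                      + (LINT w:{v-q<..v}|SM. f\<^sub>\<nu> (w - v) * lim_left x w)) in
         x t = x 0 + (LBINT s:{0..t}. \<eta> - c\<^sub>\<mu> * x s + \<xi> s)
               + c\<^sub>\<nu> * (LINT s:{0<..t}|SM. lim_left x s)))
     \<and>
     (\<forall>\<omega>\<in>space M. \<forall>u\<in>{-r..0}. X u \<omega> = \<Phi> u \<omega>)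
     \<and> semimartingale_from M F 0 X
     \<and> (AE \<omega> in M. \<forall>T\<ge>0. bounded_variation_on (\<lambda>t. X t \<omega>) 0 T)"
proof -
  have r0: "0 \<le> r" using r_pos by simp
  have sol':
    "adapted F (-r) X" "\<forall>\<omega>\<in>space M. cadlag_from (-r) (\<lambda>t. X t \<omega>)"
    "\<forall>\<omega>\<in>space M. \<forall>t\<in>{-r..0}. X t \<omega> = \<Phi> t \<omega>"
    "AE \<omega> in M. \<forall>t>0. cdgarch_eq p q \<eta> c\<^sub>\<mu> c\<^sub>\<nu> f\<^sub>\<mu> f\<^sub>\<nu>
                         (dS \<sigma>\<^sub>L (-r) (\<lambda>s. L s \<omega>)) (\<lambda>s. \<Phi> s \<omega>) (\<lambda>s. X s \<omega>) t"
    using sol unfolding strong_solution_def by blast+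
  have path: "cdg_path p q r \<eta> c\<^sub>\<mu> c\<^sub>\<nu> f\<^sub>\<mu> f\<^sub>\<nu> (dS \<sigma>\<^sub>L (-r) (\<lambda>s. L s \<omega>)) (\<lambda>s. \<Phi> s \<omega>) (\<lambda>s. X s \<omega>)"
    if \<omega>: "\<omega> \<in> space M"
      and eqs: "\<forall>t>0. cdgarch_eq p q \<eta> c\<^sub>\<mu> c\<^sub>\<nu> f\<^sub>\<mu> f\<^sub>\<nu> (dS \<sigma>\<^sub>L (-r) (\<lambda>s. L s \<omega>)) (\<lambda>s. \<Phi> s \<omega>) (\<lambda>s. X s \<omega>) t"
    for \<omega>
  proof (rule cdg_path.intro)
    show "0 \<le> p" "0 \<le> q" "r = max p q" by (fact pq(1), fact pq(2), fact r_def)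
    show "c\<^sub>\<mu> \<ge> 0" "c\<^sub>\<nu> \<ge> 0" using cmu cnu by simp_all
    show "continuous_on {-p..0} f\<^sub>\<mu>" by (fact fmu(1))
    show "\<And>u. f\<^sub>\<mu> u \<ge> 0" using fmu(2) by blast
    show "\<And>u. u \<notin> {-p..0} \<Longrightarrow> f\<^sub>\<mu> u = 0" using fmu(3) by blast
    show "continuous_on {-q..0} f\<^sub>\<nu>" by (fact fnu(1))
    show "\<And>u. f\<^sub>\<nu> u \<ge> 0" using fnu(2) by blast
    show "\<And>u. u \<notin> {-q..0} \<Longrightarrow> f\<^sub>\<nu> u = 0" using fnu(3) by blast
    show "sets (dS \<sigma>\<^sub>L (-r) (\<lambda>s. L s \<omega>)) = sets borel" unfolding dS_def by simp
    show "\<And>a b. emeasure (dS \<sigma>\<^sub>L (-r) (\<lambda>s. L s \<omega>)) {a<..b} < \<infinity>"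
      unfolding dS_def by (rule interval_measure_Ioc_finite)
    show "cadlag_from (-r) (\<lambda>s. X s \<omega>)" using sol'(2) \<omega> by blast
    show "\<And>t. t \<in> {-r..0} \<Longrightarrow> X t \<omega> = \<Phi> t \<omega>" using sol'(3) \<omega> by blast
    show "\<And>t. t > 0 \<Longrightarrow> cdgarch_eq p q \<eta> c\<^sub>\<mu> c\<^sub>\<nu> f\<^sub>\<mu> f\<^sub>\<nu> (dS \<sigma>\<^sub>L (-r) (\<lambda>s. L s \<omega>)) (\<lambda>s. \<Phi> s \<omega>) (\<lambda>s. X s \<omega>) t"
      using eqs by blast
  qed
  have aeP: "AE \<omega> in M. cdg_path p q r \<eta> c\<^sub>\<mu> c\<^sub>\<nu> f\<^sub>\<mu> f\<^sub>\<nu> (dS \<sigma>\<^sub>L (-r) (\<lambda>s. L s \<omega>)) (\<lambda>s. \<Phi> s \<omega>) (\<lambda>s. X s \<omega>)"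
    using sol'(4) AE_space by eventually_elim (rule path)
  have G1: "AE \<omega> in M. \<forall>t\<ge>0.
        (let x = (\<lambda>s. X s \<omega>); SM = dS \<sigma>\<^sub>L (-r) (\<lambda>s. L s \<omega>) in
         x t = x 0 + (LBINT s:{0..t}. \<eta> - c\<^sub>\<mu> * x s)
               + c\<^sub>\<nu> * (LINT s:{0<..t}|SM. lim_left x s)
               + ((LBINT s:{-p..t}. Fker f\<^sub>\<mu> p t s * x s)
                  + (LINT s:{-q<..t}|SM. Fker f\<^sub>\<nu> q t s * lim_left x s)))"
    using aeP by eventually_elim (auto simp: Let_def dest: cdg_path.volterra)
  have G2: "AE \<omega> in M. \<forall>t\<ge>0.
        (let x = (\<lambda>s. X s \<omega>); SM = dS \<sigma>\<^sub>L (-r) (\<lambda>s. L s \<omega>);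
             \<xi> = (\<lambda>v. (LBINT u:{-p..0}. f\<^sub>\<mu> u * x (v + u))
                      + (LINT w:{v-q<..v}|SM. f\<^sub>\<nu> (w - v) * lim_left x w)) in
         x t = x 0 + (LBINT s:{0..t}. \<eta> - c\<^sub>\<mu> * x s + \<xi> s)
               + c\<^sub>\<nu> * (LINT s:{0<..t}|SM. lim_left x s))"
    using aeP by eventually_elim (auto simp: Let_def dest: cdg_path.sfde)
  have G5: "AE \<omega> in M. \<forall>T\<ge>0. bounded_variation_on (\<lambda>t. X t \<omega>) 0 T"
    using aeP by eventually_elim (auto dest: cdg_path.bv)
  have G4: "semimartingale_from M F 0 X"
    by (rule semimart[OF filt sol'(1) sol'(2) r0 G5])
  show ?thesis using G1 G2 sol'(3) G4 G5 by blast
qed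

end
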